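(* Let $H>0$ and $S_H=\{z\in\mathbb{C}:\,|\operatorname{Im} z|\le H\}$. Let $\mu$ be a positive (locally finite Borel) measure with support in $S_H$ such that for some positive constants $C_0,\rho$ $$\mu(\{z\in S_H:\,|\operatorname{Re} z|\le r\})\le C_0\max\{1,r^\rho\}\quad\text{for all } r>0.$$ Suppose that the c-Fourier transform $\hat\mu^c$ of $\mu$ is a measure on $\mathbb{R}$. Then $\mu$ is translation bounded on $S_H$, i.e. $$\sup_{s\in\mathbb{R}}\mu(\{z\in S_H:\,s\le\operatorname{Re} z\le s+1\})<\infty.$$
   Context: For a function $\varphi\in L^1(\mathbb{R})$ with compact support, set $\hat\varphi^c(z)=\int_{\mathbb{R}}\varphi(t)e^{-2\pi i z t}\,dt$ for $z\in\mathbb{C}$ (an entire function). Let $\mathcal{D}$ be the space of $C^\infty$ functions on $\mathbb{R}$ with compact support. For a measure $\mu$ on $S_H$ satisfying the growth condition above, its c-Fourier transform $\hat\mu^c$ is the continuous linear functional on $\mathcal{D}$ defined by $(\hat\mu^c,\varphi)=\int_{S_H}\hat\varphi^c(z)\,\mu(dz)$. "$\hat\mu^c$ is a measure" means there is a (complex, locally finite) Borel measure $\sigma$ on $\mathbb{R}$ with $(\hat\mu^c,\varphi)=\int_{\mathbb{R}}\varphi\,d\sigma$ for all $\varphi\in\mathcal{D}$. *)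

theory Defs
  imports "HOL-Analysis.Analysis"
begin

definition strip :: "real \<Rightarrow> complex set" where
  "strip H = {z. \<bar>Im z\<bar> \<le> H}"

definition smooth_fun :: "(real \<Rightarrow> complex) \<Rightarrow> bool" where
  "smooth_fun \<phi> \<longleftrightarrow> (\<exists>D :: nat \<Rightarrow> real \<Rightarrow> complex. D 0 = \<phi> \<and>
      (\<forall>n x. (D n has_vector_derivative D (Suc n) x) (at x)))"

definition test_funs :: "(real \<Rightarrow> complex) set" where
  "test_funs = {\<phi>. smooth_fun \<phi> \<and> compact (closure {x. \<phi> x \<noteq> 0})}"

definition fourier_c :: "(real \<Rightarrow> complex) \<Rightarrow> complex \<Rightarrow> complex" where
  "fourier_c \<phi> z = (\<integral>t. \<phi> t * exp (- 2 * of_real pi * \<i> * z * of_real t) \<partial>lborel)"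

definition fourier_c_measure :: "complex measure \<Rightarrow> (real \<Rightarrow> complex) \<Rightarrow> complex" where
  "fourier_c_measure \<mu> \<phi> = (\<integral>z. fourier_c \<phi> z \<partial>\<mu>)"

definition locally_finite_borel :: "'a::metric_space measure \<Rightarrow> bool" where
  "locally_finite_borel M \<longleftrightarrow> sets M = sets borel \<and>
     (\<forall>K. compact K \<longrightarrow> emeasure M K < \<infinity>)"

text \<open>A complex locally finite Borel measure sigma on R, given in polar form
  d sigma = h d nu with nu positive locally finite and |h| = 1.
  The c-Fourier transform of mu "is a measure" if it acts on test functions as such a sigma.\<close>
definition fourier_c_is_measure :: "complex measure \<Rightarrow> bool" where
  "fourier_c_is_measure \<mu> \<longleftrightarrow>
     (\<exists>(\<nu>::real measure) (h::real \<Rightarrow> complex).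
        locally_finite_borel \<nu> \<and> h \<in> borel_measurable borel \<and> (\<forall>x. norm (h x) = 1) \<and>
        (\<forall>\<phi>\<in>test_funs. (\<integral>x. \<phi> x * h x \<partial>\<nu>) = fourier_c_measure \<mu> \<phi>))"

end

theory Submission
  imports Defs "HOL-Computational_Algebra.Polynomial"
begin

lemma poly_exp_tendsto: "((\<lambda>x::real. poly p x * exp (- x)) \<longlongrightarrow> 0) at_top"
proof -
  have eq: "(\<lambda>x::real. poly p x * exp (- x)) = (\<lambda>x. \<Sum>i\<le>degree p. coeff p i * (x ^ i / exp x))"
    by (auto simp: poly_altdef sum_divide_distrib exp_minus field_simps)
  have "((\<lambda>x::real. \<Sum>i\<le>degree p. coeff p i * (x ^ i / exp x)) \<longlongrightarrow> (\<Sum>i\<le>degree p. coeff p i * 0)) at_top"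
    by (intro tendsto_sum tendsto_mult tendsto_const tendsto_power_div_exp_0)
  then show ?thesis unfolding eq by simp
qed

lemma poly_exp_tendsto_right:
  "((\<lambda>t::real. poly p (inverse t) * exp (- inverse t)) \<longlongrightarrow> 0) (at_right 0)"
  using filterlim_compose[OF poly_exp_tendsto filterlim_inverse_at_top_right] by (simp add: o_def)

fun bP :: "nat \<Rightarrow> real poly" where
  "bP 0 = 1" | "bP (Suc n) = [:0,0,1:] * (bP n - pderiv (bP n))"

definition fbd :: "nat \<Rightarrow> real \<Rightarrow> real" where
  "fbd n t = (if 0 < t then poly (bP n) (inverse t) * exp (- inverse t) else 0)"

lemma fbd_deriv_pos:
  assumes "0 < t" shows "(fbd n has_real_derivative fbd (Suc n) t) (at t)"
proof -
  have d: "((\<lambda>t. poly (bP n) (inverse t) * exp (- inverse t)) has_real_derivative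
     (poly (pderiv (bP n)) (inverse t) * (- inverse (t^2)) * exp (- inverse t) +
      poly (bP n) (inverse t) * (exp (- inverse t) * inverse (t^2)))) (at t)"
    using assms
    by (auto intro!: derivative_eq_intros DERIV_chain2[OF poly_DERIV] simp: power2_eq_square)
  have eq: "poly (pderiv (bP n)) (inverse t) * (- inverse (t^2)) * exp (- inverse t) +
      poly (bP n) (inverse t) * (exp (- inverse t) * inverse (t^2)) = fbd (Suc n) t"
    using assms by (simp add: fbd_def algebra_simps power2_eq_square)
  show ?thesis
    apply (rule has_field_derivative_transform_within_open[where S="{0<..}"])
    using d eq assms by (auto simp: fbd_def)
qed

lemma fbd_deriv_neg:
  assumes "t < 0" shows "(fbd n has_real_derivative fbd (Suc n) t) (at t)"
proof -
  have "((\<lambda>_. 0::real) has_real_derivative fbd (Suc n) t) (at t)" using assms by (simp add: fbd_def)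
  then show ?thesis
    apply (rule has_field_derivative_transform_within_open[where S="{..<0}"])
    using assms by (auto simp: fbd_def)
qed

lemma fbd_deriv_zero: "(fbd n has_real_derivative fbd (Suc n) 0) (at 0)"
proof -
  have "((\<lambda>y. (fbd n y - fbd n 0) / (y - 0)) \<longlongrightarrow> 0) (at 0)"
  proof (rule filterlim_split_at)
    show "((\<lambda>y. (fbd n y - fbd n 0) / (y - 0)) \<longlongrightarrow> 0) (at_left 0)"
      by (rule tendsto_eventually) (auto simp: fbd_def eventually_at_filter)
    have "((\<lambda>t::real. poly ([:0,1:] * bP n) (inverse t) * exp (- inverse t)) \<longlongrightarrow> 0) (at_right 0)"
      by (rule poly_exp_tendsto_right)
    then show "((\<lambda>y. (fbd n y - fbd n 0) / (y - 0)) \<longlongrightarrow> 0) (at_right 0)"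
      apply (rule Lim_transform_eventually)
      apply (rule eventually_mono[OF eventually_at_right_less])
      by (auto simp: fbd_def field_simps)
  qed
  then show ?thesis by (simp add: has_field_derivative_iff fbd_def)
qed

lemma fbd_deriv: "(fbd n has_real_derivative fbd (Suc n) t) (at t)"
  using fbd_deriv_pos fbd_deriv_neg fbd_deriv_zero by (cases "t > 0"; cases "t < 0") auto


definition dseq :: "(nat \<Rightarrow> real \<Rightarrow> complex) \<Rightarrow> bool" where
  "dseq D \<longleftrightarrow> (\<forall>n x. (D n has_vector_derivative D (Suc n) x) (at x))"

lemma dseqD: "dseq D \<Longrightarrow> (D n has_vector_derivative D (Suc n) x) (at x within S)"
  unfolding dseq_def using has_vector_derivative_at_within by blast

lemma smooth_funI: "dseq D \<Longrightarrow> smooth_fun (D 0)"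
  unfolding smooth_fun_def dseq_def by blast

lemma dseq_of_real:
  assumes "\<And>n t. (F n has_real_derivative F (Suc n) t) (at t)"
  shows "dseq (\<lambda>n t. complex_of_real (F n t))"
  unfolding dseq_def using has_vector_derivative_of_real[OF assms] by blast

lemma dseq_affine:
  assumes "dseq D"
  shows "dseq (\<lambda>n t. complex_of_real (c ^ n) * D n (c * t + d))"
  unfolding dseq_def
proof (intro allI)
  fix n x
  have 1: "((\<lambda>t. c * t + d) has_vector_derivative c) (at x)"
    by (auto intro!: derivative_eq_intros)
  have "((D n \<circ> (\<lambda>t. c * t + d)) has_vector_derivative (c *\<^sub>R D (Suc n) (c * x + d))) (at x)"
    by (rule vector_diff_chain_at[OF 1]) (use assms in \<open>simp add: dseq_def\<close>)
  then have "((\<lambda>t. complex_of_real (c ^ n) * D n (c * t + d)) has_vector_derivative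
     complex_of_real (c ^ n) * (c *\<^sub>R D (Suc n) (c * x + d))) (at x)"
    by (intro derivative_intros) (simp add: o_def)
  then show "((\<lambda>t. complex_of_real (c ^ n) * D n (c * t + d)) has_vector_derivative
     complex_of_real (c ^ Suc n) * D (Suc n) (c * x + d)) (at x)"
    by (simp add: scaleR_conv_of_real mult_ac)
qed

lemma dseq_cmult: "dseq D \<Longrightarrow> dseq (\<lambda>n t. a * D n t)"
  unfolding dseq_def by (auto intro!: derivative_intros)

lemma dseq_diff: "dseq D \<Longrightarrow> dseq E \<Longrightarrow> dseq (\<lambda>n t. D n t - E n t)"
  unfolding dseq_def by (auto intro!: derivative_intros)

lemma dseq_exp: "dseq (\<lambda>n t. c ^ n * exp (c * complex_of_real t))"
  unfolding dseq_def
proof (intro allI)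
  fix n x
  have "((\<lambda>z. exp (c * z)) has_field_derivative (exp (c * complex_of_real x) * c)) (at (complex_of_real x))"
    by (auto intro!: derivative_eq_intros)
  then have "((\<lambda>t. exp (c * complex_of_real t)) has_vector_derivative (exp (c * complex_of_real x) * c)) (at x)"
    by (rule has_vector_derivative_real_field)
  then show "((\<lambda>t. c ^ n * exp (c * complex_of_real t)) has_vector_derivative c ^ Suc n * exp (c * complex_of_real x)) (at x)"
    by (auto intro!: derivative_eq_intros simp: algebra_simps)
qed

lemma leibniz_sum:
  fixes F G :: "nat \<Rightarrow> 'a::comm_semiring_1"
  shows "(\<Sum>k\<le>n. of_nat (n choose k) * (F (Suc k) * G (n - k) + F k * G (Suc (n - k)))) =
         (\<Sum>k\<le>Suc n. of_nat (Suc n choose k) * (F k * G (Suc n - k)))"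
proof -
  have A: "(\<Sum>k\<le>n. of_nat (n choose k) * (F k * G (Suc (n - k)))) =
        F 0 * G (Suc n) + (\<Sum>k\<le>n. of_nat (n choose Suc k) * (F (Suc k) * G (n - k)))"
  proof (cases n)
    case 0 then show ?thesis by simp
  next
    case (Suc m)
    have "(\<Sum>k\<le>Suc m. of_nat (Suc m choose k) * (F k * G (Suc (Suc m - k)))) =
       F 0 * G (Suc (Suc m)) + (\<Sum>k\<le>m. of_nat (Suc m choose Suc k) * (F (Suc k) * G (Suc (Suc m - Suc k))))"
      by (subst sum.atMost_Suc_shift) simp
    also have "(\<Sum>k\<le>m. of_nat (Suc m choose Suc k) * (F (Suc k) * G (Suc (Suc m - Suc k)))) =
       (\<Sum>k\<le>Suc m. of_nat (Suc m choose Suc k) * (F (Suc k) * G (Suc m - k)))"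
      by (simp only: sum.atMost_Suc binomial_eq_0[of "Suc m" "Suc (Suc m)"] lessI of_nat_0 mult_zero_left add_0_right Suc_diff_le diff_Suc_Suc)
         (rule sum.cong, auto simp: Suc_diff_le)
    finally show ?thesis using Suc by simp
  qed
  have "(\<Sum>k\<le>Suc n. of_nat (Suc n choose k) * (F k * G (Suc n - k))) =
      F 0 * G (Suc n) + (\<Sum>k\<le>n. of_nat (Suc n choose Suc k) * (F (Suc k) * G (n - k)))"
    by (subst sum.atMost_Suc_shift) simp
  also have "\<dots> = F 0 * G (Suc n) + (\<Sum>k\<le>n. of_nat (n choose k) * (F (Suc k) * G (n - k)))
      + (\<Sum>k\<le>n. of_nat (n choose Suc k) * (F (Suc k) * G (n - k)))"
    by (simp add: distrib_right sum.distrib add_ac)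
  finally show ?thesis using A by (simp add: distrib_left sum.distrib add_ac)
qed

lemma dseq_mult:
  assumes "dseq F" "dseq G"
  shows "dseq (\<lambda>n t. \<Sum>k\<le>n. of_nat (n choose k) * (F k t * G (n - k) t))"
  unfolding dseq_def
proof (intro allI)
  fix n x
  have "((\<lambda>t. \<Sum>k\<le>n. of_nat (n choose k) * (F k t * G (n - k) t)) has_vector_derivative
     (\<Sum>k\<le>n. of_nat (n choose k) * (F k x * G (Suc (n - k)) x + F (Suc k) x * G (n - k) x))) (at x)"
    using assms unfolding dseq_def by (auto intro!: derivative_eq_intros)
  also have "(\<Sum>k\<le>n. of_nat (n choose k) * (F k x * G (Suc (n - k)) x + F (Suc k) x * G (n - k) x))
     = (\<Sum>k\<le>Suc n. of_nat (Suc n choose k) * (F k x * G (Suc n - k) x))"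
    using leibniz_sum[of n "\<lambda>k. F k x" "\<lambda>k. G k x"] by (simp add: add_ac)
  finally show "((\<lambda>t. \<Sum>k\<le>n. of_nat (n choose k) * (F k t * G (n - k) t)) has_vector_derivative
     (\<Sum>k\<le>Suc n. of_nat (Suc n choose k) * (F k x * G (Suc n - k) x))) (at x)" .
qed

lemma dseq_isCont: "dseq D \<Longrightarrow> isCont (D n) x"
  unfolding dseq_def using has_vector_derivative_continuous by blast

lemma dseq_cont: "dseq D \<Longrightarrow> continuous_on S (D n)"
  by (simp add: continuous_at_imp_continuous_on dseq_isCont)

definition supp_in :: "real \<Rightarrow> (real \<Rightarrow> complex) \<Rightarrow> bool" where
  "supp_in a f \<longleftrightarrow> (\<forall>t. a < \<bar>t\<bar> \<longrightarrow> f t = 0)"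

lemma dseq_supp:
  assumes "dseq D" "supp_in a (D 0)"
  shows "supp_in a (D n)"
proof (induction n)
  case 0 then show ?case using assms by simp
next
  case (Suc n)
  show ?case unfolding supp_in_def
  proof (intro allI impI)
    fix t assume t: "a < \<bar>t\<bar>"
    have "((\<lambda>_. 0) has_vector_derivative 0) (at t)" by simp
    then have "(D n has_vector_derivative 0) (at t)"
      apply (rule has_vector_derivative_transform_within_open[where S="{t. a < \<bar>t\<bar>}"])
      using t Suc by (auto simp: supp_in_def intro!: open_Collect_less continuous_intros)
    moreover have "(D n has_vector_derivative D (Suc n) t) (at t)" using assms(1) by (simp add: dseq_def)
    ultimately show "D (Suc n) t = 0" using vector_derivative_unique_at by metis
  qed
qed

lemma supp_bounded:
  assumes "continuous_on UNIV f" "supp_in a f"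
  shows "\<exists>M. \<forall>t. norm (f t) \<le> M"
proof -
  have "compact (f ` {-a..a})" by (intro compact_continuous_image continuous_on_subset[OF assms(1)]) auto
  then obtain M where M: "\<And>y. y \<in> f ` {-a..a} \<Longrightarrow> norm y \<le> M"
    using compact_imp_bounded bounded_iff by metis
  show ?thesis
  proof (intro exI[of _ "max M 0"] allI)
    fix t show "norm (f t) \<le> max M 0"
    proof (cases "\<bar>t\<bar> \<le> a")
      case True then have "t \<in> {-a..a}" by auto
      then have "norm (f t) \<le> M" by (intro M imageI)
      then show ?thesis by simp
    next
      case False then have "f t = 0" using assms(2) by (simp add: supp_in_def)
      then show ?thesis by simp
    qed
  qed
qed

lemma supp_test_funs:
  assumes "dseq D" "supp_in a (D 0)"
  shows "D 0 \<in> test_funs"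
proof -
  have "{x. D 0 x \<noteq> 0} \<subseteq> {-\<bar>a\<bar>..\<bar>a\<bar>}" using assms(2) by (force simp: supp_in_def)
  then have "closure {x. D 0 x \<noteq> 0} \<subseteq> {-\<bar>a\<bar>..\<bar>a\<bar>}" by (intro closure_minimal) auto
  then have "compact (closure {x. D 0 x \<noteq> 0})"
    by (meson compact_imp_bounded[OF compact_Icc] bounded_subset closed_closure compact_eq_bounded_closed)
  then show ?thesis using smooth_funI[OF assms(1)] by (simp add: test_funs_def)
qed


definition ex :: "complex \<Rightarrow> real \<Rightarrow> complex" where
  "ex w t = exp (- 2 * of_real pi * \<i> * w * of_real t)"

lemma fourier_c_ex: "fourier_c g w = (\<integral>t. g t * ex w t \<partial>lborel)"
  by (simp add: fourier_c_def ex_def)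

lemma ex_cont: "continuous_on S (ex w)"
  unfolding ex_def by (intro continuous_intros)

lemma ex_deriv: "(ex w has_vector_derivative (- 2 * of_real pi * \<i> * w) * ex w t) (at t within S)"
proof -
  have eqf: "ex w = (\<lambda>x. exp (- 2 * of_real pi * \<i> * w * of_real x))" by (simp add: ex_def fun_eq_iff)
  have "((\<lambda>z. exp (- 2 * of_real pi * \<i> * w * z)) has_field_derivative
      exp (- 2 * of_real pi * \<i> * w * of_real t) * (- 2 * of_real pi * \<i> * w)) (at (of_real t))"
    by (auto intro!: derivative_eq_intros)
  from has_vector_derivative_real_field[OF this] show ?thesis
    unfolding eqf by (simp only: mult.commute)
qed

lemma norm_ex: "norm (ex w t) = exp (2 * pi * Im w * t)"
  by (simp add: ex_def norm_exp_eq_Re)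

lemma norm_ex_le: "\<bar>t\<bar> \<le> a \<Longrightarrow> norm (ex w t) \<le> exp (2 * pi * a * \<bar>Im w\<bar>)"
proof -
  assume a: "\<bar>t\<bar> \<le> a"
  have "Im w * t \<le> \<bar>Im w * t\<bar>" by simp
  also have "\<dots> = \<bar>Im w\<bar> * \<bar>t\<bar>" by (simp add: abs_mult)
  also have "\<dots> \<le> \<bar>Im w\<bar> * a" using a by (intro mult_left_mono) auto
  finally have "Im w * t \<le> a * \<bar>Im w\<bar>" by (simp add: mult.commute)
  then show ?thesis unfolding norm_ex by (simp add: mult_ac)
qed

lemma FT_Icc:
  assumes "continuous_on UNIV g" "supp_in a g" "a \<le> c"
  shows "fourier_c g w = integral {-c..c} (\<lambda>t. g t * ex w t)"
    and "integrable lborel (\<lambda>t. g t * ex w t)"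
proof -
  have eq: "(\<lambda>t. g t * ex w t) = (\<lambda>t. indicator {-c..c} t *\<^sub>R (g t * ex w t))"
    using assms(2,3) by (auto simp: supp_in_def indicator_def fun_eq_iff)
  have c: "continuous_on {-c..c} (\<lambda>t. g t * ex w t)"
    by (intro continuous_intros continuous_on_subset[OF assms(1)] ex_cont) auto
  have si: "set_integrable lborel {-c..c} (\<lambda>t. g t * ex w t)"
    by (rule borel_integrable_atLeastAtMost'[OF c])
  then show "integrable lborel (\<lambda>t. g t * ex w t)"
    unfolding set_integrable_def by (subst eq)
  show "fourier_c g w = integral {-c..c} (\<lambda>t. g t * ex w t)"
  proof -
    have "fourier_c g w = (LINT t:{-c..c}|lborel. g t * ex w t)"
      unfolding fourier_c_ex set_lebesgue_integral_def
      by (rule arg_cong[where f="\<lambda>f. integral\<^sup>L lborel f"]) (rule eq)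
    then show ?thesis using set_borel_integral_eq_integral(2)[OF si] by simp
  qed
qed

lemma FT_deriv:
  assumes D: "dseq D" "supp_in a (D 0)"
  shows "fourier_c (D (Suc n)) w = 2 * of_real pi * \<i> * w * fourier_c (D n) w"
proof -
  define c where "c = \<bar>a\<bar> + 1"
  have sn: "supp_in a (D k)" for k by (rule dseq_supp[OF D])
  have F1: "fourier_c (D k) w = integral {-c..c} (\<lambda>t. D k t * ex w t)" for k
    by (rule FT_Icc(1)[OF dseq_cont[OF D(1)] sn]) (simp add: c_def)
  have z: "D n c = 0" "D n (-c) = 0" using sn[of n] by (auto simp: supp_in_def c_def)
  have "((\<lambda>t. D (Suc n) t * ex w t + D n t * ((- 2 * of_real pi * \<i> * w) * ex w t)) has_integral
      (D n c * ex w c - D n (-c) * ex w (-c))) {-c..c}"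
    apply (rule fundamental_theorem_of_calculus)
     apply (simp add: c_def)
    apply (rule has_vector_derivative_eq_rhs[OF has_vector_derivative_mult[OF dseqD[OF D(1)] ex_deriv]])
    by (simp only: add.commute)
  then have "((\<lambda>t. D (Suc n) t * ex w t + D n t * ((- 2 * of_real pi * \<i> * w) * ex w t)) has_integral 0) {-c..c}"
    using z by simp
  then have I0: "integral {-c..c} (\<lambda>t. D (Suc n) t * ex w t + (- 2 * of_real pi * \<i> * w) * (D n t * ex w t)) = 0"
    by (simp add: integral_unique mult_ac)
  have int: "(\<lambda>t. D k t * ex w t) integrable_on {-c..c}" for k
    by (intro integrable_continuous_interval continuous_intros dseq_cont[OF D(1)] ex_cont)
  have "integral {-c..c} (\<lambda>t. D (Suc n) t * ex w t) + (- 2 * of_real pi * \<i> * w) * integral {-c..c} (\<lambda>t. D n t * ex w t) = 0"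
  proof -
    have "integral {-c..c} (\<lambda>t. D (Suc n) t * ex w t + (- 2 * of_real pi * \<i> * w) * (D n t * ex w t))
       = integral {-c..c} (\<lambda>t. D (Suc n) t * ex w t) + integral {-c..c} (\<lambda>t. (- 2 * of_real pi * \<i> * w) * (D n t * ex w t))"
      by (rule integral_add[OF int integrable_on_mult_right[OF int]])
    also have "integral {-c..c} (\<lambda>t. (- 2 * of_real pi * \<i> * w) * (D n t * ex w t)) = (- 2 * of_real pi * \<i> * w) * integral {-c..c} (\<lambda>t. D n t * ex w t)"
      by (rule integral_mult_right)
    finally show ?thesis using I0 by simp
  qed
  then have "integral {-c..c} (\<lambda>t. D (Suc n) t * ex w t) = - ((- 2 * of_real pi * \<i> * w) * integral {-c..c} (\<lambda>t. D n t * ex w t))"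
    by (rule add_eq_0_iff2[THEN iffD1])
  moreover have e: "- ((- 2 * of_real pi * \<i> * w) * Y) = 2 * of_real pi * \<i> * w * Y" for Y :: complex
    by (simp add: algebra_simps)
  ultimately show ?thesis by (simp only: F1 e)
qed

lemma FT_iter:
  assumes D: "dseq D" "supp_in a (D 0)"
  shows "fourier_c (D n) w = (2 * of_real pi * \<i> * w) ^ n * fourier_c (D 0) w"
proof (induction n)
  case (Suc n)
  show ?case unfolding FT_deriv[OF D] Suc by (simp only: power_Suc mult.assoc)
qed simp

lemma FT_bound:
  assumes "continuous_on UNIV g" "supp_in a g" "0 \<le> a" "\<And>t. norm (g t) \<le> M"
  shows "norm (fourier_c g w) \<le> M * exp (2 * pi * a * \<bar>Im w\<bar>) * (2 * a)"
proof -
  have M0: "0 \<le> M" using assms(4)[of 0] by (meson norm_ge_zero order.trans)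
  have "norm (integral {-a..a} (\<lambda>t. g t * ex w t)) \<le> M * exp (2 * pi * a * \<bar>Im w\<bar>) * (a - - a)"
  proof (rule integral_bound)
    show "continuous_on {- a..a} (\<lambda>t. g t * ex w t)"
      by (intro continuous_intros continuous_on_subset[OF assms(1)] ex_cont) auto
    fix t assume "t \<in> {-a..a}"
    then have "norm (ex w t) \<le> exp (2 * pi * a * \<bar>Im w\<bar>)" by (intro norm_ex_le) auto
    then show "norm (g t * ex w t) \<le> M * exp (2 * pi * a * \<bar>Im w\<bar>)"
      unfolding norm_mult using M0 by (intro mult_mono assms(4)) auto
  qed (use assms in auto)
  then show ?thesis using FT_Icc(1)[OF assms(1,2), of a] by simp
qed

lemma FT_decay:
  assumes D: "dseq D" "supp_in a (D 0)" and a: "0 \<le> a" and M: "\<And>t. norm (D n t) \<le> M"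
  shows "(2 * pi * norm w) ^ n * norm (fourier_c (D 0) w) \<le> M * exp (2 * pi * a * \<bar>Im w\<bar>) * (2 * a)"
proof -
  have "norm (fourier_c (D n) w) \<le> M * exp (2 * pi * a * \<bar>Im w\<bar>) * (2 * a)"
    by (rule FT_bound[OF dseq_cont[OF D(1)] dseq_supp[OF D] a M])
  moreover have "norm (fourier_c (D n) w) = (2 * pi * norm w) ^ n * norm (fourier_c (D 0) w)"
    by (subst FT_iter[OF D, of n]) (simp add: norm_mult norm_power)
  ultimately show ?thesis by simp
qed

lemma FT_modulate:
  "fourier_c (\<lambda>t. g t * exp (2 * of_real pi * \<i> * of_real s * of_real t)) w = fourier_c g (w - of_real s)"
proof -
  have e: "exp (2 * of_real pi * \<i> * of_real s * of_real t) * exp (- 2 * of_real pi * \<i> * w * of_real t)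
     = exp (- 2 * of_real pi * \<i> * (w - of_real s) * of_real t)" for t
    by (subst exp_add[symmetric]) (rule arg_cong[where f=exp], simp add: algebra_simps)
  show ?thesis unfolding fourier_c_def
    by (rule Bochner_Integration.integral_cong[OF refl]) (simp add: mult_exp_exp algebra_simps)
qed

lemma FT_scale:
  assumes "0 < d"
  shows "fourier_c (\<lambda>t. of_real (1/d) * g (t / d)) w = fourier_c g (of_real d * w)"
proof -
  have "fourier_c (\<lambda>t. of_real (1/d) * g (t / d)) w =
      \<bar>d\<bar> *\<^sub>R (\<integral>x. of_real (1/d) * g ((0 + d * x) / d) * ex w (0 + d * x) \<partial>lborel)"
    unfolding fourier_c_ex using assms by (subst lborel_integral_real_affine[where c=d and t=0]) auto
  also have "\<dots> = (\<integral>x. g x * ex (of_real d * w) x \<partial>lborel)"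
    using assms by (simp add: scaleR_conv_of_real ex_def mult_ac)
  finally show ?thesis by (simp add: fourier_c_ex)
qed


lemma dseq_cont_comp[continuous_intros]:
  assumes "dseq D" "continuous_on S f"
  shows "continuous_on S (\<lambda>x. D n (f x))"
  by (rule continuous_on_compose2[OF dseq_cont[OF assms(1), of UNIV] assms(2)]) auto

lemma Icc_lborel:
  fixes h :: "real \<Rightarrow> complex"
  assumes "continuous_on UNIV h" "\<And>t. c < \<bar>t\<bar> \<Longrightarrow> h t = 0"
  shows "(\<integral>t. h t \<partial>lborel) = integral {-c..c} h" and "integrable lborel h"
proof -
  have eq: "h = (\<lambda>t. indicator {-c..c} t *\<^sub>R h t)"
    using assms(2) by (auto simp: indicator_def fun_eq_iff)
  have si: "set_integrable lborel {-c..c} h"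
    by (rule borel_integrable_atLeastAtMost'[OF continuous_on_subset[OF assms(1)]]) auto
  then show "integrable lborel h"
    unfolding set_integrable_def by (subst eq)
  have "(\<integral>t. h t \<partial>lborel) = (LINT t:{-c..c}|lborel. h t)"
    unfolding set_lebesgue_integral_def
    by (rule arg_cong[where f="\<lambda>f. integral\<^sup>L lborel f"]) (rule eq)
  then show "(\<integral>t. h t \<partial>lborel) = integral {-c..c} h"
    using set_borel_integral_eq_integral(2)[OF si] by simp
qed

definition br :: "real \<Rightarrow> real" where "br t = fbd 0 (1 * t + 1/2) * fbd 0 ((-1) * t + 1/2)"

definition bD :: "nat \<Rightarrow> real \<Rightarrow> complex" where
  "bD = (\<lambda>n t. \<Sum>k\<le>n. of_nat (n choose k) *
     ((complex_of_real (1 ^ k) * complex_of_real (fbd k (1 * t + 1/2))) *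
      (complex_of_real ((-1) ^ (n - k)) * complex_of_real (fbd (n - k) ((-1) * t + 1/2)))))"

lemma bD_dseq: "dseq bD"
proof -
  have d: "dseq (\<lambda>n t. complex_of_real (fbd n t))" by (rule dseq_of_real) (rule fbd_deriv)
  show ?thesis unfolding bD_def
    by (rule dseq_mult[OF dseq_affine[OF d] dseq_affine[OF d]])
qed

lemma bD0: "bD 0 t = complex_of_real (br t)"
  by (simp add: bD_def br_def)

lemma br_nonneg: "0 \<le> br t"
  by (simp add: br_def fbd_def)

lemma br_even: "br (- t) = br t"
  by (simp add: br_def mult.commute)

lemma br_supp: "1/2 < \<bar>t\<bar> \<Longrightarrow> br t = 0"
  by (auto simp: br_def fbd_def)

lemma br_0: "0 < br 0"
  by (simp add: br_def fbd_def)

lemma bD_supp: "supp_in (1/2) (bD 0)"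
  by (simp add: supp_in_def bD0 br_supp)

lemma br_cont: "continuous_on S br"
proof -
  have "continuous_on S (\<lambda>t. Re (bD 0 t))" by (intro continuous_intros dseq_cont[OF bD_dseq])
  then show ?thesis by (simp add: bD0)
qed

definition cD :: "nat \<Rightarrow> real \<Rightarrow> complex" where
  "cD n t = integral {-1/2..1/2} (\<lambda>u. bD n (t - u) * bD 0 u)"

lemma cD_dseq: "dseq cD"
  unfolding dseq_def
proof (intro allI)
  fix n x
  have "((\<lambda>x. integral (cbox (-1/2) (1/2)) (\<lambda>u. bD n (x - u) * bD 0 u)) has_vector_derivative
      integral (cbox (-1/2) (1/2)) (\<lambda>u. bD (Suc n) (x - u) * bD 0 u)) (at x within UNIV)"
  proof (rule leibniz_rule_vector_derivative)
    fix x t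
    have 1: "((\<lambda>x. x - t) has_vector_derivative 1) (at x)" by (auto intro!: derivative_eq_intros)
    have "((bD n \<circ> (\<lambda>x. x - t)) has_vector_derivative (1 *\<^sub>R bD (Suc n) (x - t))) (at x)"
      by (rule vector_diff_chain_at[OF 1]) (simp add: dseqD[OF bD_dseq])
    then show "((\<lambda>x. bD n (x - t) * bD 0 t) has_vector_derivative bD (Suc n) (x - t) * bD 0 t) (at x within UNIV)"
      by (auto intro!: derivative_intros simp: o_def)
  next
    fix x show "(\<lambda>u. bD n (x - u) * bD 0 u) integrable_on cbox (-1/2) (1/2)"
      by (intro integrable_continuous continuous_intros bD_dseq)
  next
    have "continuous_on (UNIV \<times> cbox (-1/2) (1/2)) (\<lambda>p. bD (Suc n) (fst p - snd p) * bD 0 (snd p))"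
      by (intro continuous_intros bD_dseq)
    then show "continuous_on (UNIV \<times> cbox (-1/2) (1/2)) (\<lambda>(x, t). bD (Suc n) (x - t) * bD 0 t)"
      by (simp add: case_prod_unfold)
  qed auto
  then show "(cD n has_vector_derivative cD (Suc n) x) (at x)"
    by (simp add: cD_def[abs_def] cbox_interval)
qed

lemma cD_supp: "supp_in 1 (cD 0)"
  unfolding supp_in_def
proof (intro allI impI)
  fix t :: real assume t: "1 < \<bar>t\<bar>"
  have "integral {-1/2..1/2} (\<lambda>u. bD 0 (t - u) * bD 0 u) = integral {-1/2..1/2::real} (\<lambda>u. 0::complex)"
  proof (rule integral_cong)
    fix u assume "u \<in> {-1/2..1/2::real}"
    then have "\<bar>u\<bar> \<le> 1/2" by auto
    moreover have "\<bar>t\<bar> \<le> \<bar>t - u\<bar> + \<bar>u\<bar>" using abs_triangle_ineq[of "t - u" u] by simp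
    ultimately have "1/2 < \<bar>t - u\<bar>" using t by linarith
    then show "bD 0 (t - u) * bD 0 u = 0" using bD_supp by (simp add: supp_in_def)
  qed
  then show "cD 0 t = 0" by (simp add: cD_def)
qed

lemma ex_add: "ex w (u + x) = ex w u * ex w x"
  unfolding ex_def by (subst exp_add[symmetric]) (rule arg_cong[where f=exp], simp add: algebra_simps)

lemma FT_conv: "fourier_c (cD 0) w = fourier_c (bD 0) w ^ 2"
proof -
  let ?F = "fourier_c (bD 0) w"
  have bc: "continuous_on UNIV (bD k)" for k by (rule dseq_cont[OF bD_dseq])
  have "fourier_c (cD 0) w = integral {-1..1} (\<lambda>t. cD 0 t * ex w t)"
    by (rule FT_Icc(1)[OF dseq_cont[OF cD_dseq] cD_supp]) simp
  also have "\<dots> = integral {-1..1} (\<lambda>t. integral {-1/2..1/2} (\<lambda>u. bD 0 (t - u) * bD 0 u * ex w t))"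
    by (simp add: cD_def)
  also have "\<dots> = integral {-1/2..1/2} (\<lambda>u. integral {-1..1} (\<lambda>t. bD 0 (t - u) * bD 0 u * ex w t))"
  proof -
    have "continuous_on (cbox (-1, -1/2) (1, 1/2)) (\<lambda>p::real\<times>real. bD 0 (fst p - snd p) * bD 0 (snd p) * ex w (fst p))"
      by (intro continuous_intros bD_dseq continuous_on_compose2[OF ex_cont[of UNIV w]]) auto
    then have "continuous_on (cbox (-1, -1/2) (1, 1/2)) (\<lambda>(t,u). bD 0 (t - u) * bD 0 u * ex w t)"
      by (simp add: case_prod_unfold)
    from integral_swap_continuous[OF this] show ?thesis by (simp add: cbox_interval)
  qed
  also have "\<dots> = integral {-1/2..1/2} (\<lambda>u. bD 0 u * ex w u * ?F)"
  proof (rule integral_cong)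
    fix u :: real assume u: "u \<in> {-1/2..1/2}"
    have "(\<lambda>t. bD 0 (t - u) * bD 0 u * ex w t) = (\<lambda>t. bD 0 u * (bD 0 (t - u) * ex w t))"
      by (auto simp: fun_eq_iff mult_ac)
    then have "integral {-1..1} (\<lambda>t. bD 0 (t - u) * bD 0 u * ex w t) = bD 0 u * integral {-1..1} (\<lambda>t. bD 0 (t - u) * ex w t)"
      by (simp only: integral_mult_right)
    also have "integral {-1..1} (\<lambda>t. bD 0 (t - u) * ex w t) = (\<integral>t. bD 0 (t - u) * ex w t \<partial>lborel)"
    proof (rule Icc_lborel(1)[symmetric])
      show "continuous_on UNIV (\<lambda>t. bD 0 (t - u) * ex w t)"
        by (intro continuous_intros bD_dseq ex_cont)
      fix t :: real assume t: "1 < \<bar>t\<bar>"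
      have "\<bar>u\<bar> \<le> 1/2" using u by auto
      moreover have "\<bar>t\<bar> \<le> \<bar>t - u\<bar> + \<bar>u\<bar>" using abs_triangle_ineq[of "t - u" u] by simp
      ultimately have "1/2 < \<bar>t - u\<bar>" using t by linarith
      then show "bD 0 (t - u) * ex w t = 0" using bD_supp by (simp add: supp_in_def)
    qed
    also have "\<dots> = \<bar>1\<bar> *\<^sub>R (\<integral>x. bD 0 ((u + 1 * x) - u) * ex w (u + 1 * x) \<partial>lborel)"
      by (rule lborel_integral_real_affine) simp
    also have "\<dots> = (\<integral>x. ex w u * (bD 0 x * ex w x) \<partial>lborel)"
      by (simp add: ex_add mult_ac)
    also have "\<dots> = ex w u * ?F" by (simp add: fourier_c_ex)
    finally show "integral {-1..1} (\<lambda>t. bD 0 (t - u) * bD 0 u * ex w t) = bD 0 u * ex w u * ?F"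
      by (simp add: mult_ac)
  qed
  also have "\<dots> = integral {-1/2..1/2} (\<lambda>u. bD 0 u * ex w u) * ?F" by simp
  also have "integral {-1/2..1/2} (\<lambda>u. bD 0 u * ex w u) = ?F"
    using FT_Icc(1)[OF bc bD_supp, of "1/2"] by simp
  finally show ?thesis by (simp add: power2_eq_square)
qed

lemma FT_bump_real: "Im (fourier_c (bD 0) (complex_of_real \<xi>)) = 0"
proof -
  let ?F = "fourier_c (bD 0) (complex_of_real \<xi>)"
  have c: "cnj (ex (complex_of_real \<xi>) x) = ex (complex_of_real \<xi>) (- x)" for x
    by (simp add: ex_def exp_cnj)
  have "cnj ?F = (\<integral>x. cnj (bD 0 x * ex (complex_of_real \<xi>) x) \<partial>lborel)"
    by (simp only: Bochner_Integration.integral_cnj fourier_c_ex)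
  also have "\<dots> = (\<integral>x. bD 0 x * ex (complex_of_real \<xi>) (- x) \<partial>lborel)"
    by (simp add: c bD0)
  also have "\<dots> = \<bar>-1\<bar> *\<^sub>R (\<integral>x. bD 0 (0 + (-1) * x) * ex (complex_of_real \<xi>) (- (0 + (-1) * x)) \<partial>lborel)"
    by (rule lborel_integral_real_affine) simp
  also have "\<dots> = ?F"
    by (simp add: fourier_c_ex bD0 br_even)
  finally have "cnj ?F = ?F" .
  then show ?thesis by (metis complex_cnj_cancel_iff complex_eq_iff cnj.simps(2) neg_equal_zero)
qed

definition mb :: real where "mb = integral {-1/2..1/2} br"

lemma mb_pos: "0 < mb"
proof -
  have int: "br integrable_on {-1/2..1/2}" by (intro integrable_continuous_interval br_cont)
  have "0 \<le> mb" unfolding mb_def by (rule integral_nonneg[OF int br_nonneg])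
  moreover have "mb \<noteq> 0"
  proof
    assume "mb = 0"
    then have h0: "(br has_integral 0) (cbox (-1/2) (1/2))"
      using int by (simp add: mb_def cbox_interval has_integral_integral)
    have "br 0 = 0"
      using has_integral_0_cbox_imp_0[OF br_cont _ h0, of 0] br_nonneg by (auto simp: box_real)
    then show False using br_0 by simp
  qed
  ultimately show ?thesis by simp
qed

lemma FT_bump_lower:
  assumes "\<bar>\<xi>\<bar> \<le> 1/3"
  shows "mb / 2 \<le> Re (fourier_c (bD 0) (complex_of_real \<xi>))"
proof -
  let ?f = "\<lambda>u. bD 0 u * ex (complex_of_real \<xi>) u"
  have bc: "continuous_on UNIV (bD k)" for k by (rule dseq_cont[OF bD_dseq])
  have F: "fourier_c (bD 0) (complex_of_real \<xi>) = integral {-1/2..1/2} ?f"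
    using FT_Icc(1)[OF bc bD_supp, of "1/2"] by simp
  have int: "?f integrable_on {-1/2..1/2}"
    by (intro integrable_continuous_interval continuous_on_mult continuous_on_subset[OF bc] ex_cont) auto
  have ReI: "Re (integral {-1/2..1/2} ?f) = integral {-1/2..1/2} (\<lambda>u. Re (?f u))"
    by (rule integral_unique[OF has_integral_Re[OF integrable_integral[OF int]], symmetric])
  have re: "Re (?f u) = br u * cos (2 * pi * \<xi> * u)" for u
    by (simp add: bD0 ex_def Re_exp)
  have "integral {-1/2..1/2} (\<lambda>u. br u / 2) \<le> integral {-1/2..1/2} (\<lambda>u. Re (?f u))"
  proof (rule integral_le)
    show "(\<lambda>u. br u / 2) integrable_on {-1/2..1/2}"
      by (auto intro!: integrable_continuous_interval continuous_intros br_cont)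
    show "(\<lambda>u. Re (?f u)) integrable_on {-1/2..1/2}"
      using integrable_integral[OF int] has_integral_Re by blast
    fix u :: real assume u: "u \<in> {-1/2..1/2}"
    have "\<bar>2 * pi * \<xi> * u\<bar> \<le> pi / 3"
    proof -
      have "\<bar>2 * pi * \<xi> * u\<bar> = 2 * pi * (\<bar>\<xi>\<bar> * \<bar>u\<bar>)" by (simp add: abs_mult)
      also have "\<bar>\<xi>\<bar> * \<bar>u\<bar> \<le> 1/3 * (1/2)" using u assms by (intro mult_mono) auto
      then have "2 * pi * (\<bar>\<xi>\<bar> * \<bar>u\<bar>) \<le> 2 * pi * (1/3 * (1/2))" by (intro mult_left_mono) auto
      finally show ?thesis by simp
    qed
    then have "cos (pi / 3) \<le> cos \<bar>2 * pi * \<xi> * u\<bar>"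
      by (intro cos_monotone_0_pi_le) auto
    then have "1/2 \<le> cos (2 * pi * \<xi> * u)" by (simp add: cos_60)
    then show "br u / 2 \<le> Re (?f u)" unfolding re
      using br_nonneg[of u] by (metis mult.commute mult_left_mono times_divide_eq_right mult.right_neutral)
  qed
  then show ?thesis unfolding F ReI mb_def by simp
qed


definition Bf :: "complex \<Rightarrow> complex" where "Bf = fourier_c (cD 0)"

lemma cD_cont: "continuous_on S (cD k)" by (rule dseq_cont[OF cD_dseq])
lemma cD_supp_k: "supp_in 1 (cD k)" by (rule dseq_supp[OF cD_dseq cD_supp])

definition Mc :: "nat \<Rightarrow> real" where
  "Mc k = (SOME M. \<forall>t. norm (cD k t) \<le> M)"

lemma Mc: "norm (cD k t) \<le> Mc k"
proof -
  have "\<exists>M. \<forall>t. norm (cD k t) \<le> M" by (rule supp_bounded[OF cD_cont cD_supp_k])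
  then show ?thesis unfolding Mc_def by (rule someI_ex[where P="\<lambda>M. \<forall>t. norm (cD k t) \<le> M", THEN spec])
qed

lemma Mc_nonneg: "0 \<le> Mc k" using Mc[of k 0] by (meson norm_ge_zero order.trans)

lemma B_bound:
  assumes "\<bar>Im w\<bar> \<le> 1"
  shows "norm (Bf w) \<le> Mc 0 * exp (2 * pi) * 2"
proof -
  have "norm (Bf w) \<le> Mc 0 * exp (2 * pi * 1 * \<bar>Im w\<bar>) * (2 * 1)"
    unfolding Bf_def by (rule FT_bound[OF cD_cont cD_supp]) (auto simp: Mc)
  also have "\<dots> \<le> Mc 0 * exp (2 * pi) * 2"
  proof -
    have e: "exp (2 * pi * 1 * \<bar>Im w\<bar>) \<le> exp (2 * pi)" using assms by simp
    have "Mc 0 * exp (2 * pi * 1 * \<bar>Im w\<bar>) \<le> Mc 0 * exp (2 * pi)" by (rule mult_left_mono[OF e Mc_nonneg])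
    then show ?thesis by simp
  qed
  finally show ?thesis .
qed

lemma B_decay:
  assumes "\<bar>Im w\<bar> \<le> 1" "1/6 \<le> \<bar>Re w\<bar>"
  shows "norm (Bf w) \<le> Mc n * exp (2 * pi) * 2 * (1 / (6 * \<bar>Re w\<bar>)) ^ n"
proof -
  have "(2 * pi * norm w) ^ n * norm (Bf w) \<le> Mc n * exp (2 * pi * 1 * \<bar>Im w\<bar>) * (2 * 1)"
    unfolding Bf_def by (rule FT_decay[OF cD_dseq cD_supp]) (auto simp: Mc)
  also have "\<dots> \<le> Mc n * exp (2 * pi) * 2"
  proof -
    have e: "exp (2 * pi * 1 * \<bar>Im w\<bar>) \<le> exp (2 * pi)" using assms by simp
    have "Mc n * exp (2 * pi * 1 * \<bar>Im w\<bar>) \<le> Mc n * exp (2 * pi)" by (rule mult_left_mono[OF e Mc_nonneg])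
    then show ?thesis by simp
  qed
  finally have 1: "(2 * pi * norm w) ^ n * norm (Bf w) \<le> Mc n * exp (2 * pi) * 2" .
  have p: "0 < 6 * \<bar>Re w\<bar>" using assms by auto
  have "6 * \<bar>Re w\<bar> \<le> 2 * pi * norm w"
  proof -
    have "6 * \<bar>Re w\<bar> \<le> 2 * pi * \<bar>Re w\<bar>" using pi_gt3 by (intro mult_right_mono) auto
    also have "\<dots> \<le> 2 * pi * norm w" using abs_Re_le_cmod[of w] by (intro mult_left_mono) auto
    finally show ?thesis .
  qed
  then have "(6 * \<bar>Re w\<bar>) ^ n * norm (Bf w) \<le> (2 * pi * norm w) ^ n * norm (Bf w)"
    using p by (intro mult_right_mono power_mono) auto
  with 1 have "(6 * \<bar>Re w\<bar>) ^ n * norm (Bf w) \<le> Mc n * exp (2 * pi) * 2" by linarith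
  then show ?thesis using p by (simp add: power_divide field_simps)
qed

lemma B_real:
  shows "0 \<le> Re (Bf (complex_of_real \<xi>))"
    and "\<bar>\<xi>\<bar> \<le> 1/6 \<Longrightarrow> (mb / 2)^2 \<le> Re (Bf (complex_of_real \<xi>))"
proof -
  let ?F = "fourier_c (bD 0) (complex_of_real \<xi>)"
  have B: "Bf (complex_of_real \<xi>) = ?F ^ 2" by (simp add: Bf_def FT_conv)
  have ReB: "Re (Bf (complex_of_real \<xi>)) = (Re ?F)^2"
    unfolding B using FT_bump_real[of \<xi>] by (simp add: power2_eq_square)
  then show "0 \<le> Re (Bf (complex_of_real \<xi>))" by simp
  assume "\<bar>\<xi>\<bar> \<le> 1/6"
  then have "mb / 2 \<le> Re ?F" by (intro FT_bump_lower) auto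
  then show "(mb / 2)^2 \<le> Re (Bf (complex_of_real \<xi>))" unfolding ReB
    using mb_pos by (intro power_mono) auto
qed

definition Ke :: "nat \<Rightarrow> real" where
  "Ke k = exp 1 * (\<Sum>j\<le>k. real (k choose j) * Mc j)"

lemma exp_sub_one_bound: "\<bar>exp x - 1\<bar> \<le> \<bar>x\<bar> * exp \<bar>x::real\<bar>"
proof (cases "0 \<le> x")
  case True
  have "1 + (- x) \<le> exp (- x)" using exp_ge_add_one_self[of "-x"] by simp
  then have "(1 - x) * exp x \<le> exp (-x) * exp x" by (intro mult_right_mono) auto
  then have "exp x - x * exp x \<le> 1" by (simp add: algebra_simps exp_minus_inverse)
  then show ?thesis using True by auto
next
  case False
  have "1 + x \<le> exp x" by (rule exp_ge_add_one_self)
  moreover have "exp x \<le> 1" using False by auto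
  moreover have "1 \<le> exp \<bar>x\<bar>" by auto
  ultimately show ?thesis using False
    by (smt (verit, ccfv_threshold) mult_le_cancel_left1 abs_of_neg)
qed

lemma B_err:
  fixes \<xi> \<eta> :: real
  assumes eta: "\<bar>2 * pi * \<eta>\<bar> \<le> 1"
  shows "(2 * pi * \<bar>\<xi>\<bar>) ^ k * norm (Bf (complex_of_real \<xi> + \<i> * complex_of_real \<eta>) - Bf (complex_of_real \<xi>))
     \<le> \<bar>2 * pi * \<eta>\<bar> * Ke k * 2"
proof -
  define c where "c = 2 * pi * \<eta>"
  define E where "E = (\<lambda>n t. \<Sum>k\<le>n. of_nat (n choose k) * (cD k t * (complex_of_real c ^ (n - k) * exp (complex_of_real c * complex_of_real t))))"
  define G where "G = (\<lambda>n t. E n t - cD n t)"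
  have dE: "dseq E" unfolding E_def by (rule dseq_mult[OF cD_dseq dseq_exp])
  have dG: "dseq G" unfolding G_def by (rule dseq_diff[OF dE cD_dseq])
  have G0: "G 0 t = cD 0 t * exp (complex_of_real c * complex_of_real t) - cD 0 t" for t
    by (simp add: G_def E_def)
  have sG: "supp_in 1 (G 0)" using cD_supp unfolding supp_in_def G0 by simp
  have Gb: "norm (G k t) \<le> \<bar>c\<bar> * Ke k" for t
  proof (cases "\<bar>t\<bar> \<le> 1")
    case False
    then have "G k t = 0" using dseq_supp[OF dG sG] by (simp add: supp_in_def)
    moreover have "0 \<le> Ke k" unfolding Ke_def by (intro mult_nonneg_nonneg sum_nonneg) (auto simp: Mc_nonneg)
    ultimately show ?thesis by simp
  next
    case True
    have ct: "\<bar>c * t\<bar> \<le> 1" unfolding abs_mult using True eta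
      by (intro mult_le_one) (auto simp: c_def)
    have ex_le: "norm (exp (complex_of_real c * complex_of_real t)) \<le> exp 1"
      using ct by (simp add: norm_exp_eq_Re)
    have ex1: "norm (exp (complex_of_real c * complex_of_real t) - 1) \<le> \<bar>c\<bar> * exp 1"
    proof -
      have "exp (complex_of_real c * complex_of_real t) - 1 = complex_of_real (exp (c * t) - 1)"
        by (simp add: exp_of_real[symmetric])
      then have "norm (exp (complex_of_real c * complex_of_real t) - 1) = norm (complex_of_real (exp (c * t) - 1))" by (simp only:)
      also have "\<dots> = \<bar>exp (c * t) - 1\<bar>" by (rule norm_of_real)
      also have "\<dots> \<le> \<bar>c * t\<bar> * exp \<bar>c * t\<bar>" by (rule exp_sub_one_bound)
      also have "\<dots> \<le> \<bar>c\<bar> * exp 1"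
        using ct True by (intro mult_mono) (auto simp: abs_mult intro: mult_left_le)
      finally show ?thesis .
    qed
    have split: "G k t = (\<Sum>j<k. of_nat (k choose j) * (cD j t * (complex_of_real c ^ (k - j) * exp (complex_of_real c * complex_of_real t))))
        + cD k t * (exp (complex_of_real c * complex_of_real t) - 1)"
    proof -
      have "E k t = (\<Sum>j<k. of_nat (k choose j) * (cD j t * (complex_of_real c ^ (k - j) * exp (complex_of_real c * complex_of_real t))))
          + cD k t * exp (complex_of_real c * complex_of_real t)"
        unfolding E_def by (subst lessThan_Suc_atMost[symmetric], subst sum.lessThan_Suc) simp
      moreover have "\<And>S a b::complex. S + a * b - a = S + a * (b - 1)" by (simp add: algebra_simps)
      ultimately show ?thesis unfolding G_def by (simp only:)
    qed
    have "norm (G k t) \<le> (\<Sum>j<k. real (k choose j) * (Mc j * (\<bar>c\<bar> * exp 1))) + Mc k * (\<bar>c\<bar> * exp 1)"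
      unfolding split
    proof (rule norm_triangle_le[OF add_mono])
      show "norm (\<Sum>j<k. of_nat (k choose j) * (cD j t * (complex_of_real c ^ (k - j) * exp (complex_of_real c * complex_of_real t))))
          \<le> (\<Sum>j<k. real (k choose j) * (Mc j * (\<bar>c\<bar> * exp 1)))"
      proof (rule order.trans[OF norm_sum sum_mono])
        fix j assume j: "j \<in> {..<k}"
        have "\<bar>c\<bar> ^ (k - j) \<le> \<bar>c\<bar>"
          using power_decreasing[of 1 "k-j" "\<bar>c\<bar>"] j eta by (auto simp: c_def)
        then have h: "norm (complex_of_real c ^ (k - j) * exp (complex_of_real c * complex_of_real t)) \<le> \<bar>c\<bar> * exp 1"
          unfolding norm_mult norm_power using ex_le by (intro mult_mono) auto
        show "norm (of_nat (k choose j) * (cD j t * (complex_of_real c ^ (k - j) * exp (complex_of_real c * complex_of_real t))))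
            \<le> real (k choose j) * (Mc j * (\<bar>c\<bar> * exp 1))"
        proof -
          have h2: "norm (cD j t * (complex_of_real c ^ (k - j) * exp (complex_of_real c * complex_of_real t))) \<le> Mc j * (\<bar>c\<bar> * exp 1)"
            by (rule order.trans[OF norm_mult_ineq]) (intro mult_mono Mc h Mc_nonneg norm_ge_zero)
          show ?thesis
            by (simp only: norm_mult[of "of_nat (k choose j) :: complex"] norm_of_nat) (rule mult_left_mono[OF h2], simp)
        qed
      qed
      show "norm (cD k t * (exp (complex_of_real c * complex_of_real t) - 1)) \<le> Mc k * (\<bar>c\<bar> * exp 1)"
        unfolding norm_mult using Mc[of k t] ex1 Mc_nonneg[of k] by (intro mult_mono) auto
    qed
    also have "\<dots> = \<bar>c\<bar> * Ke k"
    proof -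
      have s1: "(\<Sum>j\<le>k. real (k choose j) * Mc j) = (\<Sum>j<k. real (k choose j) * Mc j) + Mc k"
        by (subst lessThan_Suc_atMost[symmetric], subst sum.lessThan_Suc) simp
      have s2: "(\<Sum>j<k. real (k choose j) * (Mc j * (\<bar>c\<bar> * exp 1))) = (\<bar>c\<bar> * exp 1) * (\<Sum>j<k. real (k choose j) * Mc j)"
        by (simp add: sum_distrib_left mult_ac)
      show ?thesis unfolding Ke_def s1 s2 by (simp add: algebra_simps)
    qed
    finally show ?thesis .
  qed
  have "(2 * pi * norm (complex_of_real \<xi>)) ^ k * norm (fourier_c (G 0) (complex_of_real \<xi>))
      \<le> \<bar>c\<bar> * Ke k * exp (2 * pi * 1 * \<bar>Im (complex_of_real \<xi>)\<bar>) * (2 * 1)"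
    by (rule FT_decay[OF dG sG _ Gb]) simp
  moreover have "fourier_c (G 0) (complex_of_real \<xi>) = Bf (complex_of_real \<xi> + \<i> * complex_of_real \<eta>) - Bf (complex_of_real \<xi>)"
  proof -
    have e: "exp (complex_of_real c * complex_of_real t) * ex (complex_of_real \<xi>) t = ex (complex_of_real \<xi> + \<i> * complex_of_real \<eta>) t" for t
      unfolding ex_def c_def by (subst exp_add[symmetric]) (rule arg_cong[where f=exp], simp add: algebra_simps)
    have i1: "integrable lborel (\<lambda>t. cD 0 t * ex w t)" for w
      by (rule FT_Icc(2)[OF cD_cont cD_supp order.refl])
    have "fourier_c (G 0) (complex_of_real \<xi>) = (\<integral>t. cD 0 t * ex (complex_of_real \<xi> + \<i> * complex_of_real \<eta>) t - cD 0 t * ex (complex_of_real \<xi>) t \<partial>lborel)"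
      unfolding fourier_c_ex G0 by (rule Bochner_Integration.integral_cong[OF refl]) (simp add: algebra_simps e[symmetric])
    also have "\<dots> = Bf (complex_of_real \<xi> + \<i> * complex_of_real \<eta>) - Bf (complex_of_real \<xi>)"
      unfolding Bf_def fourier_c_ex by (rule Bochner_Integration.integral_diff[OF i1 i1])
    finally show ?thesis .
  qed
  ultimately show ?thesis by (simp add: c_def)
qed


lemma Bf_Icc: "Bf w = integral (cbox (-1) 1) (\<lambda>t. cD 0 t * ex w t)"
  unfolding Bf_def using FT_Icc(1)[OF cD_cont cD_supp order.refl] by (simp add: cbox_interval)

lemma Bf_deriv: "(Bf has_field_derivative integral (cbox (-1) 1) (\<lambda>t. cD 0 t * ((- 2 * of_real pi * \<i> * of_real t) * ex w t))) (at w)"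
proof -
  have "((\<lambda>w. integral (cbox (-1) 1) (\<lambda>t. cD 0 t * ex w t)) has_field_derivative
      integral (cbox (-1) 1) (\<lambda>t. cD 0 t * ((- 2 * of_real pi * \<i> * of_real t) * ex w t))) (at w within UNIV)"
  proof (rule leibniz_rule_field_derivative)
    fix x :: complex and t :: real
    show "((\<lambda>x. cD 0 t * ex x t) has_field_derivative cD 0 t * ((- 2 * of_real pi * \<i> * of_real t) * ex x t)) (at x within UNIV)"
    proof -
      have "((\<lambda>x. exp (- 2 * of_real pi * \<i> * x * of_real t)) has_field_derivative exp (- 2 * of_real pi * \<i> * x * of_real t) * (- 2 * of_real pi * \<i> * of_real t)) (at x)"
        by (auto intro!: derivative_eq_intros)
      from DERIV_cmult[OF this, of "cD 0 t"] show ?thesis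
        unfolding ex_def by (simp only: mult_ac)
    qed
  next
    fix x :: complex show "(\<lambda>t. cD 0 t * ex x t) integrable_on cbox (-1) 1"
      by (intro integrable_continuous continuous_intros cD_cont ex_cont)
  next
    have "continuous_on (UNIV \<times> cbox (-1) 1) (\<lambda>p::complex\<times>real. cD 0 (snd p) * ((- 2 * of_real pi * \<i> * of_real (snd p)) * exp (- 2 * of_real pi * \<i> * fst p * of_real (snd p))))"
      by (intro continuous_intros continuous_on_compose2[OF cD_cont[of UNIV 0]]) auto
    then show "continuous_on (UNIV \<times> cbox (-1) 1) (\<lambda>(x, t). cD 0 t * ((- 2 * of_real pi * \<i> * of_real t) * ex x t))"
      by (simp add: case_prod_unfold ex_def)
  qed auto
  then show ?thesis unfolding Bf_Icc[abs_def] by simp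
qed

lemma Bf_cont: "continuous_on S Bf"
  by (intro continuous_at_imp_continuous_on ballI DERIV_isCont[OF Bf_deriv])

definition psi :: "real \<Rightarrow> real \<Rightarrow> complex" where
  "psi d t = complex_of_real (1/d) * cD 0 (t / d)"

definition phi :: "real \<Rightarrow> real \<Rightarrow> real \<Rightarrow> complex" where
  "phi d s t = psi d t * exp (2 * of_real pi * \<i> * of_real s * of_real t)"

lemma phi_test:
  assumes "0 < d"
  shows "phi d s \<in> test_funs"
proof -
  define P1 where "P1 = (\<lambda>n t. complex_of_real (1/d) * (complex_of_real ((1/d) ^ n) * cD n ((1/d) * t + 0)))"
  have d1: "dseq P1" unfolding P1_def by (intro dseq_cmult dseq_affine cD_dseq)
  define P2 where "P2 = (\<lambda>n t. \<Sum>k\<le>n. of_nat (n choose k) * (P1 k t * ((2 * of_real pi * \<i> * of_real s) ^ (n - k) * exp ((2 * of_real pi * \<i> * of_real s) * complex_of_real t))))"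
  have d2: "dseq P2" unfolding P2_def by (rule dseq_mult[OF d1 dseq_exp])
  have eq: "P2 0 = phi d s"
  proof
    fix t
    have e: "(1/d) * t + 0 = t / d" by simp
    show "P2 0 t = phi d s t" unfolding P2_def P1_def phi_def psi_def e by simp
  qed
  have "supp_in d (P2 0)" unfolding eq supp_in_def
  proof (intro allI impI)
    fix t assume "d < \<bar>t\<bar>"
    then have "1 < \<bar>t / d\<bar>" using assms by (simp add: abs_div)
    then show "phi d s t = 0" using cD_supp by (simp add: supp_in_def phi_def psi_def)
  qed
  from supp_test_funs[OF d2 this] show ?thesis unfolding eq .
qed

lemma phi_FT:
  assumes "0 < d"
  shows "fourier_c (phi d s) z = Bf (complex_of_real d * (z - complex_of_real s))"
proof -
  have "fourier_c (phi d s) z = fourier_c (psi d) (z - complex_of_real s)"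
    unfolding phi_def[abs_def] by (rule FT_modulate)
  also have "\<dots> = fourier_c (cD 0) (complex_of_real d * (z - complex_of_real s))"
    unfolding psi_def[abs_def] by (rule FT_scale[OF assms])
  finally show ?thesis by (simp add: Bf_def)
qed

lemma phi_bound:
  assumes "0 < d"
  shows "norm (phi d s t) \<le> Mc 0 / d * indicator {-d..d} t"
proof (cases "\<bar>t\<bar> \<le> d")
  case True
  have "norm (exp (2 * of_real pi * \<i> * of_real s * of_real t)) = 1"
    by (simp add: norm_exp_eq_Re)
  moreover have "norm (phi d s t) = norm (complex_of_real (1/d)) * norm (cD 0 (t / d)) * norm (exp (2 * of_real pi * \<i> * of_real s * of_real t))"
    by (simp only: phi_def psi_def norm_mult)
  ultimately have "norm (phi d s t) = norm (cD 0 (t / d)) / d"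
    using assms by (simp add: norm_divide)
  also have "\<dots> \<le> Mc 0 / d" using assms Mc by (intro divide_right_mono) auto
  moreover have "t \<in> {-d..d}" using True by auto
  ultimately show ?thesis by simp
next
  case False
  then have "1 < \<bar>t / d\<bar>" using assms by (simp add: abs_div)
  then have "phi d s t = 0" using cD_supp by (simp add: supp_in_def phi_def psi_def)
  moreover have "t \<notin> {-d..d}" using False by auto
  ultimately show ?thesis by simp
qed

lemma phi_cont: "continuous_on S (phi d s)"
proof -
  have c1: "continuous_on S (\<lambda>t. t * inverse d)" by (intro continuous_on_mult_right continuous_on_id)
  have "continuous_on S (\<lambda>t. cD 0 (t * inverse d))" by (rule continuous_on_compose2[OF cD_cont[of UNIV 0] c1]) auto
  then have c2: "continuous_on S (\<lambda>t. cD 0 (t / d))" by (simp add: divide_inverse)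
  have c3: "continuous_on S (\<lambda>t. exp (2 * of_real pi * \<i> * of_real s * complex_of_real t))"
    by (intro continuous_on_exp continuous_on_mult continuous_on_const continuous_on_of_real continuous_on_id)
  show ?thesis unfolding phi_def[abs_def] psi_def
    by (intro continuous_on_mult continuous_on_const c2 c3)
qed

lemma nu_bound:
  assumes d: "0 < d" and nu: "locally_finite_borel \<nu>" and h: "h \<in> borel_measurable borel" "\<And>x. norm (h x) = 1"
  shows "norm (\<integral>x. phi d s x * h x \<partial>\<nu>) \<le> Mc 0 / d * measure \<nu> {-d..d}"
proof -
  have sets: "sets \<nu> = sets borel" and fin: "emeasure \<nu> {-d..d} < \<infinity>"
    using nu unfolding locally_finite_borel_def by (auto simp: compact_Icc)
  have mset: "{-d..d} \<in> sets \<nu>" using sets by simp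
  have gi: "integrable \<nu> (\<lambda>x. Mc 0 / d * indicator {-d..d} x)"
    using mset fin by (intro integrable_mult_right integrable_real_indicator)
  have fm: "(\<lambda>x. phi d s x * h x) \<in> borel_measurable \<nu>"
    unfolding measurable_cong_sets[OF sets refl]
    by (intro borel_measurable_times h borel_measurable_continuous_onI phi_cont)
  have bnd: "norm (phi d s x * h x) \<le> Mc 0 / d * indicator {-d..d} x" for x
    using phi_bound[OF d, of s x] h(2)[of x] by (simp add: norm_mult)
  have fi: "integrable \<nu> (\<lambda>x. phi d s x * h x)"
    by (rule Bochner_Integration.integrable_bound[OF gi fm]) (intro AE_I2 order.trans[OF bnd], simp only: real_norm_def abs_ge_self)
  have "norm (\<integral>x. phi d s x * h x \<partial>\<nu>) \<le> (\<integral>x. Mc 0 / d * indicator {-d..d} x \<partial>\<nu>)"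
    by (rule Bochner_Integration.integral_norm_bound_integral[OF fi gi bnd])
  also have "\<dots> = Mc 0 / d * measure \<nu> {-d..d}"
    using sets by (simp add: sets_eq_imp_space_eq)
  finally show ?thesis .
qed


definition Cset :: "real \<Rightarrow> real \<Rightarrow> real \<Rightarrow> complex set" where
  "Cset H T a = {z \<in> strip H. \<bar>Re z - a\<bar> \<le> T}"

definition tlf :: "real \<Rightarrow> real \<Rightarrow> nat \<Rightarrow> complex \<Rightarrow> real" where
  "tlf T s n z = (if \<bar>Re z - s\<bar> \<le> T then 1 else (T / \<bar>Re z - s\<bar>) ^ n)"

lemma strip_closed: "closed (strip H)"
  unfolding strip_def by (intro closed_Collect_le continuous_intros)

lemma Cset_closed: "closed (Cset H T a)"
proof -
  have "Cset H T a = strip H \<inter> {z. \<bar>Re z - a\<bar> \<le> T}" by (auto simp: Cset_def)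
  moreover have "closed {z. \<bar>Re z - a\<bar> \<le> T}" by (intro closed_Collect_le continuous_intros)
  ultimately show ?thesis using strip_closed by auto
qed

lemma tl_nonneg: "0 < T \<Longrightarrow> 0 \<le> tlf T s n z"
  by (simp add: tlf_def)

lemma tl_le1: "0 < T \<Longrightarrow> tlf T s n z \<le> 1"
  by (auto simp: tlf_def power_le_one)

lemma tl_meas: "tlf T s n \<in> borel_measurable borel"
  unfolding tlf_def[abs_def] by measurable

lemma tl_pointwise:
  assumes T: "0 < T" and z: "z \<in> strip H"
  shows "ennreal (tlf T s n z) \<le> indicator (Cset H T s) z +
    (\<Sum>j. ennreal ((1 / (2 * real j + 1)) ^ n) *
       (indicator (Cset H T (s + (2 * real j + 2) * T)) z + indicator (Cset H T (s - (2 * real j + 2) * T)) z))"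
    (is "_ \<le> _ + suminf ?g")
proof (cases "\<bar>Re z - s\<bar> \<le> T")
  case True
  then show ?thesis using z by (simp add: tlf_def Cset_def indicator_def)
next
  case False
  define d where "d = \<bar>Re z - s\<bar>"
  have dT: "T < d" using False by (simp add: d_def)
  define m where "m = nat \<lfloor>(d - T) / (2 * T)\<rfloor>"
  have fl0: "0 \<le> \<lfloor>(d - T) / (2 * T)\<rfloor>" using dT T by simp
  have m1: "real m \<le> (d - T) / (2 * T)" using fl0 unfolding m_def by linarith
  have m2: "(d - T) / (2 * T) < real m + 1" using fl0 unfolding m_def by linarith
  have lo: "(2 * real m + 1) * T \<le> d" using m1 T by (simp add: field_simps)
  have hi: "d < (2 * real m + 3) * T" using m2 T by (simp add: field_simps)
  have tle: "tlf T s n z \<le> (1 / (2 * real m + 1)) ^ n"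
  proof -
    have "T / d \<le> 1 / (2 * real m + 1)" using lo T dT by (simp add: field_simps)
    then have "(T / d) ^ n \<le> (1 / (2 * real m + 1)) ^ n" using T dT by (intro power_mono) auto
    then show ?thesis using False by (simp add: tlf_def d_def)
  qed
  have ind: "1 \<le> indicator (Cset H T (s + (2 * real m + 2) * T)) z + (indicator (Cset H T (s - (2 * real m + 2) * T)) z :: ennreal)"
  proof (cases "s \<le> Re z")
    case True
    then have "Re z - s = d" by (simp add: d_def)
    then have "\<bar>Re z - (s + (2 * real m + 2) * T)\<bar> \<le> T" using lo hi by (simp add: abs_le_iff algebra_simps)
    then have "z \<in> Cset H T (s + (2 * real m + 2) * T)"
      using z unfolding Cset_def by auto
    then show ?thesis by simp
  next
    case False
    then have "s - Re z = d" by (simp add: d_def)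
    then have "\<bar>Re z - (s - (2 * real m + 2) * T)\<bar> \<le> T" using lo hi by (simp add: abs_le_iff algebra_simps)
    then have "z \<in> Cset H T (s - (2 * real m + 2) * T)"
      using z unfolding Cset_def by auto
    then show ?thesis by simp
  qed
  have "ennreal (tlf T s n z) \<le> ennreal ((1 / (2 * real m + 1)) ^ n) * 1"
    using tle by simp
  also have "\<dots> \<le> ?g m" by (intro mult_left_mono ind) auto
  also have "?g m \<le> suminf ?g"
    using sum_le_suminf[of ?g "{m}"] by auto
  also have "\<dots> \<le> indicator (Cset H T s) z + suminf ?g" by simp
  finally show ?thesis .
qed

locale MU =
  fixes \<mu> :: "complex measure" and H C0 \<rho> :: real
  assumes sets: "sets \<mu> = sets borel"
    and null: "emeasure \<mu> (- strip H) = 0"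
    and C0: "C0 > 0" and rho: "\<rho> > 0"
    and growth: "\<forall>r>0. emeasure \<mu> {z \<in> strip H. \<bar>Re z\<bar> \<le> r} \<le> ennreal (C0 * max 1 (r powr \<rho>))"
begin

lemma Cset_sets: "Cset H T a \<in> sets \<mu>"
  using sets Cset_closed by (simp add: borel_closed)

lemma AE_strip: "AE z in \<mu>. z \<in> strip H"
proof (rule AE_I')
  show "- strip H \<in> null_sets \<mu>" using null sets strip_closed
    by (auto simp: null_sets_def borel_open open_Compl)
qed auto

lemma Cset_fin:
  assumes T: "0 < T"
  shows "emeasure \<mu> (Cset H T a) \<le> ennreal (C0 * max 1 ((\<bar>a\<bar> + T) powr \<rho>))"
proof -
  have "Cset H T a \<subseteq> {z \<in> strip H. \<bar>Re z\<bar> \<le> \<bar>a\<bar> + T}" by (auto simp: Cset_def)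
  then have "emeasure \<mu> (Cset H T a) \<le> emeasure \<mu> {z \<in> strip H. \<bar>Re z\<bar> \<le> \<bar>a\<bar> + T}"
    by (rule emeasure_mono) (use sets strip_closed in \<open>auto intro!: borel_closed closed_Collect_le continuous_intros simp: strip_def\<close>)
  also have "\<dots> \<le> ennreal (C0 * max 1 ((\<bar>a\<bar> + T) powr \<rho>))" using growth T by auto
  finally show ?thesis .
qed

lemma Cset_emeasure:
  assumes T: "0 < T"
  shows "emeasure \<mu> (Cset H T a) = ennreal (measure \<mu> (Cset H T a))"
  using Cset_fin[OF T, of a] by (intro emeasure_eq_ennreal_measure) (auto simp: top_unique)

lemma Cset_measure_le:
  assumes T: "0 < T"
  shows "measure \<mu> (Cset H T a) \<le> C0 * (1 + \<bar>a\<bar> + T) ^ nat \<lceil>\<rho>\<rceil>"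
proof -
  have "ennreal (measure \<mu> (Cset H T a)) \<le> ennreal (C0 * max 1 ((\<bar>a\<bar> + T) powr \<rho>))"
    using Cset_fin[OF T, of a] Cset_emeasure[OF T, of a] by simp
  then have "measure \<mu> (Cset H T a) \<le> C0 * max 1 ((\<bar>a\<bar> + T) powr \<rho>)"
    using C0 rho by (subst (asm) ennreal_le_iff) auto
  also have "\<dots> \<le> C0 * (1 + \<bar>a\<bar> + T) ^ nat \<lceil>\<rho>\<rceil>"
  proof (intro mult_left_mono)
    have b: "1 \<le> 1 + \<bar>a\<bar> + T" using T by simp
    have "(\<bar>a\<bar> + T) powr \<rho> \<le> (1 + \<bar>a\<bar> + T) powr \<rho>" using T rho by (intro powr_mono2) auto
    also have "\<dots> \<le> (1 + \<bar>a\<bar> + T) powr (real (nat \<lceil>\<rho>\<rceil>))"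
      using b le_of_int_ceiling[of \<rho>] rho by (intro powr_mono) auto
    also have "\<dots> = (1 + \<bar>a\<bar> + T) ^ nat \<lceil>\<rho>\<rceil>" using b by (intro powr_realpow) auto
    finally show "max 1 ((\<bar>a\<bar> + T) powr \<rho>) \<le> (1 + \<bar>a\<bar> + T) ^ nat \<lceil>\<rho>\<rceil>"
      using b by (auto intro: one_le_power)
  qed (use C0 in auto)
  finally show ?thesis .
qed

lemma tail_integral:
  assumes T: "0 < T"
  shows "(\<integral>\<^sup>+ z. ennreal (tlf T s n z) \<partial>\<mu>) \<le> ennreal (measure \<mu> (Cset H T s)) +
    (\<Sum>j. ennreal ((1 / (2 * real j + 1)) ^ n) *
       (ennreal (measure \<mu> (Cset H T (s + (2 * real j + 2) * T))) + ennreal (measure \<mu> (Cset H T (s - (2 * real j + 2) * T)))))"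
proof -
  have mind: "indicator (Cset H T a) \<in> borel_measurable \<mu>" for a
    using Cset_sets by (intro borel_measurable_indicator)
  have [measurable]: "Cset H T a \<in> sets \<mu>" for a by (rule Cset_sets)
  have "(\<integral>\<^sup>+ z. ennreal (tlf T s n z) \<partial>\<mu>) \<le> (\<integral>\<^sup>+ z. indicator (Cset H T s) z +
    (\<Sum>j. ennreal ((1 / (2 * real j + 1)) ^ n) *
       (indicator (Cset H T (s + (2 * real j + 2) * T)) z + indicator (Cset H T (s - (2 * real j + 2) * T)) z)) \<partial>\<mu>)"
    apply (rule nn_integral_mono_AE)
    apply (rule AE_mp[OF AE_strip])
    apply (rule AE_I2)
    apply (rule impI)
    apply (erule tl_pointwise[OF T])
    done
  also have "\<dots> = (\<integral>\<^sup>+ z. indicator (Cset H T s) z \<partial>\<mu>) + (\<integral>\<^sup>+ z. (\<Sum>j. ennreal ((1 / (2 * real j + 1)) ^ n) *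
       (indicator (Cset H T (s + (2 * real j + 2) * T)) z + indicator (Cset H T (s - (2 * real j + 2) * T)) z)) \<partial>\<mu>)"
    by (rule nn_integral_add) measurable
  also have "(\<integral>\<^sup>+ z. (\<Sum>j. ennreal ((1 / (2 * real j + 1)) ^ n) *
       (indicator (Cset H T (s + (2 * real j + 2) * T)) z + indicator (Cset H T (s - (2 * real j + 2) * T)) z)) \<partial>\<mu>)
      = (\<Sum>j. \<integral>\<^sup>+ z. ennreal ((1 / (2 * real j + 1)) ^ n) *
       (indicator (Cset H T (s + (2 * real j + 2) * T)) z + indicator (Cset H T (s - (2 * real j + 2) * T)) z) \<partial>\<mu>)"
    by (rule nn_integral_suminf) (auto intro!: mind)
  also have "\<dots> = (\<Sum>j. ennreal ((1 / (2 * real j + 1)) ^ n) *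
       (ennreal (measure \<mu> (Cset H T (s + (2 * real j + 2) * T))) + ennreal (measure \<mu> (Cset H T (s - (2 * real j + 2) * T)))))"
    by (simp add: nn_integral_cmult nn_integral_add mind Cset_sets Cset_emeasure[OF T])
  finally show ?thesis
    by (simp add: Cset_sets Cset_emeasure[OF T])
qed

end


definition qt :: "nat \<Rightarrow> nat \<Rightarrow> real" where
  "qt m j = (1 / (2 * real j + 1)) ^ (m + 2) * (2 * real j + 3) ^ m"

definition qS :: "nat \<Rightarrow> real" where
  "qS m = 1 + 2 * (\<Sum>j. qt m j)"

lemma qt_nonneg: "0 \<le> qt m j" by (simp add: qt_def)

lemma qt_summable: "summable (qt m)"
proof (rule summable_comparison_test')
  have "summable (\<lambda>j. inverse (real (Suc j) ^ 2))"
    using inverse_power_summable[of 2, where 'a=real] by (subst summable_Suc_iff) simp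
  then show "summable (\<lambda>j. 3 ^ m * inverse (real (Suc j) ^ 2))" by (rule summable_mult)
  fix j :: nat assume "0 \<le> j"
  have p: "0 < 2 * real j + 1" by simp
  have "(2 * real j + 3) ^ m \<le> (3 * (2 * real j + 1)) ^ m" by (intro power_mono) auto
  then have "qt m j \<le> (1 / (2 * real j + 1)) ^ (m + 2) * (3 * (2 * real j + 1)) ^ m"
    unfolding qt_def by (intro mult_left_mono) auto
  also have "\<dots> = 3 ^ m * inverse ((2 * real j + 1) ^ 2)"
  proof -
    define a where "a = 2 * real j + 1"
    have a: "0 < a" using p by (simp add: a_def)
    have e1: "(1 / a) ^ m * a ^ m = 1" using a by (simp add: power_divide)
    have "(1 / a) ^ (m + 2) * (3 * a) ^ m = 3 ^ m * ((1 / a) ^ m * a ^ m) * (1 / a) ^ 2"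
      by (simp only: power_add power_mult_distrib mult_ac)
    then show ?thesis unfolding a_def[symmetric] e1 by (simp add: power_divide inverse_eq_divide)
  qed
  also have "\<dots> \<le> 3 ^ m * inverse (real (Suc j) ^ 2)"
    by (intro mult_left_mono le_imp_inverse_le power_mono) auto
  finally show "norm (qt m j) \<le> 3 ^ m * inverse (real (Suc j) ^ 2)" using qt_nonneg[of m j] by simp
qed

lemma qS_ge1: "1 \<le> qS m"
  unfolding qS_def using suminf_nonneg[OF qt_summable qt_nonneg] by simp

lemma ennreal_mp: "0 \<le> a \<Longrightarrow> 0 \<le> x \<Longrightarrow> 0 \<le> y \<Longrightarrow> ennreal a * (ennreal x + ennreal y) = ennreal (a * (x + y))"
  by (simp add: ennreal_mult ennreal_plus)

context MU
begin

lemma weighted_tail: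
  assumes T: "0 < T" and R: "T \<le> R" and G: "0 \<le> G"
    and NG: "\<And>a. measure \<mu> (Cset H T a) \<le> G * (1 + \<bar>a\<bar> / R) ^ m"
  shows "(\<integral>\<^sup>+ z. ennreal (tlf T s (m + 2) z) \<partial>\<mu>) \<le> ennreal (G * (1 + \<bar>s\<bar> / R) ^ m * qS m)"
proof -
  let ?w = "(1 + \<bar>s\<bar> / R) ^ m"
  have w0: "0 \<le> ?w" using R T by simp
  have Npm: "measure \<mu> (Cset H T (s + e * ((2 * real j + 2) * T))) \<le> G * ?w * (2 * real j + 3) ^ m"
    if e: "\<bar>e\<bar> = 1" for j e
  proof -
    have "1 + \<bar>s + e * ((2 * real j + 2) * T)\<bar> / R \<le> (1 + \<bar>s\<bar> / R) * (2 * real j + 3)"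
    proof -
      have "\<bar>s + e * ((2 * real j + 2) * T)\<bar> \<le> \<bar>s\<bar> + (2 * real j + 2) * T"
        using abs_triangle_ineq[of s "e * ((2 * real j + 2) * T)"] e T by (simp add: abs_mult)
      then have "\<bar>s + e * ((2 * real j + 2) * T)\<bar> / R \<le> \<bar>s\<bar> / R + (2 * real j + 2) * T / R"
        using R T by (simp add: divide_right_mono add_divide_distrib[symmetric])
      also have "(2 * real j + 2) * T / R \<le> 2 * real j + 2"
      proof -
        have "(2 * real j + 2) * T / R \<le> (2 * real j + 2) * R / R"
          using R T by (intro divide_right_mono mult_left_mono) auto
        then show ?thesis using R T by simp
      qed
      finally have "1 + \<bar>s + e * ((2 * real j + 2) * T)\<bar> / R \<le> 1 + \<bar>s\<bar> / R + (2 * real j + 2)" by simp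
      also have "\<dots> \<le> (1 + \<bar>s\<bar> / R) * (2 * real j + 3)"
      proof -
        have x0: "0 \<le> \<bar>s\<bar> / R" using R T by simp
        have "\<bar>s\<bar> / R * 1 \<le> \<bar>s\<bar> / R * (2 * real j + 3)" using x0 by (intro mult_left_mono) auto
        moreover have "(1 + \<bar>s\<bar> / R) * (2 * real j + 3) = (2 * real j + 3) + \<bar>s\<bar> / R * (2 * real j + 3)"
          by (simp add: distrib_right)
        ultimately show ?thesis by linarith
      qed
      finally show ?thesis .
    qed
    then have "(1 + \<bar>s + e * ((2 * real j + 2) * T)\<bar> / R) ^ m \<le> ((1 + \<bar>s\<bar> / R) * (2 * real j + 3)) ^ m"
      using R T by (intro power_mono) auto
    then have "G * (1 + \<bar>s + e * ((2 * real j + 2) * T)\<bar> / R) ^ m \<le> G * ?w * (2 * real j + 3) ^ m"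
      using G by (simp add: power_mult_distrib mult.assoc mult_left_mono)
    with NG show ?thesis by (rule order.trans)
  qed
  have Np: "measure \<mu> (Cset H T (s + (2 * real j + 2) * T)) \<le> G * ?w * (2 * real j + 3) ^ m" for j
    using Npm[where e=1 and j=j] by simp
  have Nm: "measure \<mu> (Cset H T (s - (2 * real j + 2) * T)) \<le> G * ?w * (2 * real j + 3) ^ m" for j
    using Npm[where e="-1" and j=j] by simp
  have trm: "ennreal ((1 / (2 * real j + 1)) ^ (m + 2)) *
       (ennreal (measure \<mu> (Cset H T (s + (2 * real j + 2) * T))) + ennreal (measure \<mu> (Cset H T (s - (2 * real j + 2) * T))))
     \<le> ennreal (2 * G * ?w * qt m j)" for j
  proof -
    have "ennreal ((1 / (2 * real j + 1)) ^ (m + 2)) *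
       (ennreal (measure \<mu> (Cset H T (s + (2 * real j + 2) * T))) + ennreal (measure \<mu> (Cset H T (s - (2 * real j + 2) * T))))
       = ennreal ((1 / (2 * real j + 1)) ^ (m + 2) * (measure \<mu> (Cset H T (s + (2 * real j + 2) * T)) + measure \<mu> (Cset H T (s - (2 * real j + 2) * T))))"
      by (rule ennreal_mp) auto
    also have "\<dots> \<le> ennreal ((1 / (2 * real j + 1)) ^ (m + 2) * (2 * (G * ?w * (2 * real j + 3) ^ m)))"
      using Np[of j] Nm[of j] by (intro ennreal_leI mult_left_mono) auto
    also have "\<dots> = ennreal (2 * G * ?w * qt m j)" by (simp add: qt_def mult_ac)
    finally show ?thesis .
  qed
  have "(\<integral>\<^sup>+ z. ennreal (tlf T s (m + 2) z) \<partial>\<mu>) \<le> ennreal (measure \<mu> (Cset H T s)) +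
    (\<Sum>j. ennreal ((1 / (2 * real j + 1)) ^ (m + 2)) *
       (ennreal (measure \<mu> (Cset H T (s + (2 * real j + 2) * T))) + ennreal (measure \<mu> (Cset H T (s - (2 * real j + 2) * T)))))"
    by (rule tail_integral[OF T])
  also have "\<dots> \<le> ennreal (G * ?w) + (\<Sum>j. ennreal (2 * G * ?w * qt m j))"
    using NG[of s] by (intro add_mono ennreal_leI suminf_le trm) auto
  also have "(\<Sum>j. ennreal (2 * G * ?w * qt m j)) = ennreal (\<Sum>j. 2 * G * ?w * qt m j)"
    using G w0 qt_nonneg by (intro suminf_ennreal2 summable_mult qt_summable) auto
  also have "(\<Sum>j. 2 * G * ?w * qt m j) = 2 * G * ?w * (\<Sum>j. qt m j)"
    by (rule suminf_mult[OF qt_summable])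
  also have "ennreal (G * ?w) + ennreal (2 * G * ?w * (\<Sum>j. qt m j)) = ennreal (G * ?w + 2 * G * ?w * (\<Sum>j. qt m j))"
    using G w0 suminf_nonneg[OF qt_summable qt_nonneg] by (intro ennreal_plus[symmetric]) auto
  also have "\<dots> = ennreal (G * ?w * qS m)"
    by (simp add: qS_def algebra_simps)
  finally show ?thesis .
qed

end

definition Kb :: "nat \<Rightarrow> real" where "Kb n = Mc 0 * exp (2 * pi) * 2 + Mc n * exp (2 * pi) * 2"
definition Kerr :: "nat \<Rightarrow> real" where "Kerr n = 2 * (Ke 0 + Ke n)"

lemma Ke_nonneg: "0 \<le> Ke k"
  unfolding Ke_def by (intro mult_nonneg_nonneg sum_nonneg) (auto simp: Mc_nonneg)

lemma Bw_bounds: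
  fixes \<delta> H T s :: real and z :: complex
  assumes d: "0 < \<delta>" and T: "T = 1 / (6 * \<delta>)" and dH: "\<delta> * H \<le> 1 / (2 * pi)" and z: "z \<in> strip H"
  defines "w \<equiv> complex_of_real \<delta> * (z - complex_of_real s)"
  shows "norm (Bf w) \<le> Kb n * tlf T s n z"
    and "(mb / 2)^2 * indicator (Cset H T s) z - 2 * pi * \<delta> * H * Kerr n * tlf T s n z \<le> Re (Bf w)"
proof -
  have Tp: "0 < T" using d T by simp
  have Rew: "Re w = \<delta> * (Re z - s)" and Imw: "Im w = \<delta> * Im z" by (simp_all add: w_def)
  have Hz: "\<bar>Im z\<bar> \<le> H" using z by (simp add: strip_def)
  have H0: "0 \<le> H" using Hz by linarith
  have aIm: "\<bar>Im w\<bar> \<le> \<delta> * H" unfolding Imw using d Hz by (simp add: abs_mult)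
  have pi1: "1 / (2 * pi) \<le> 1" using pi_gt3 by (simp add: field_simps)
  have Im1: "\<bar>Im w\<bar> \<le> 1" using aIm dH pi1 by linarith
  have eta1: "\<bar>2 * pi * Im w\<bar> \<le> 2 * pi * \<delta> * H"
    using aIm by (simp add: abs_mult mult.assoc)
  have eta2: "2 * pi * \<delta> * H \<le> 1" using dH by (simp add: field_simps)
  have aR: "\<bar>Re w\<bar> = \<delta> * \<bar>Re z - s\<bar>" unfolding Rew using d by (simp add: abs_mult)
  have cen: "\<bar>Re w\<bar> \<le> 1/6 \<longleftrightarrow> \<bar>Re z - s\<bar> \<le> T"
  proof -
    have "\<delta> * \<bar>Re z - s\<bar> \<le> 1/6 \<longleftrightarrow> \<bar>Re z - s\<bar> \<le> 1 / (6 * \<delta>)"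
      using d by (simp add: field_simps)
    then show ?thesis unfolding aR T .
  qed
  have out: "1 / (6 * \<bar>Re w\<bar>) = T / \<bar>Re z - s\<bar>" if "\<bar>Re z - s\<bar> > T"
    unfolding aR T by simp
  have Mn: "0 \<le> Mc k * exp (2 * pi) * 2" for k using Mc_nonneg[of k] by simp
  show "norm (Bf w) \<le> Kb n * tlf T s n z"
  proof (cases "\<bar>Re z - s\<bar> \<le> T")
    case True
    then show ?thesis using B_bound[OF Im1] Mn[of n] by (simp add: tlf_def Kb_def)
  next
    case False
    then have "1/6 \<le> \<bar>Re w\<bar>" using cen by linarith
    from B_decay[OF Im1 this, of n] out[of] False
    have "norm (Bf w) \<le> Mc n * exp (2 * pi) * 2 * (T / \<bar>Re z - s\<bar>) ^ n" by simp
    also have "\<dots> \<le> Kb n * (T / \<bar>Re z - s\<bar>) ^ n"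
      unfolding Kb_def using Mn[of 0] Tp by (intro mult_right_mono) auto
    finally show ?thesis using False by (simp add: tlf_def)
  qed
  let ?\<xi> = "Re w" and ?\<eta> = "Im w"
  have weq: "w = complex_of_real ?\<xi> + \<i> * complex_of_real ?\<eta>" by (rule complex_eq)
  have err: "(2 * pi * \<bar>?\<xi>\<bar>) ^ k * norm (Bf w - Bf (complex_of_real ?\<xi>)) \<le> 2 * pi * \<delta> * H * Kerr n" if k: "k = 0 \<or> k = n" for k
  proof -
    have "(2 * pi * \<bar>?\<xi>\<bar>) ^ k * norm (Bf w - Bf (complex_of_real ?\<xi>)) \<le> \<bar>2 * pi * ?\<eta>\<bar> * Ke k * 2"
    proof -
      have e: "\<bar>2 * pi * ?\<eta>\<bar> \<le> 1" using eta1 eta2 by linarith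
      from B_err[OF e, of ?\<xi> k] show ?thesis by (simp only: weq[symmetric])
    qed
    also have "\<dots> = \<bar>2 * pi * ?\<eta>\<bar> * (Ke k * 2)" by (simp only: mult.assoc)
    also have "\<dots> \<le> 2 * pi * \<delta> * H * (Ke k * 2)"
      by (rule mult_right_mono[OF eta1]) (simp add: Ke_nonneg)
    also have "\<dots> \<le> 2 * pi * \<delta> * H * Kerr n"
      using k Ke_nonneg[of 0] Ke_nonneg[of n] d H0 by (intro mult_left_mono) (auto simp: Kerr_def)
    finally show ?thesis .
  qed
  have reB: "Re (Bf (complex_of_real ?\<xi>)) - norm (Bf w - Bf (complex_of_real ?\<xi>)) \<le> Re (Bf w)"
  proof -
    have "Re (Bf (complex_of_real ?\<xi>)) - Re (Bf w) \<le> norm (Bf w - Bf (complex_of_real ?\<xi>))"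
      using abs_Re_le_cmod[of "Bf w - Bf (complex_of_real ?\<xi>)"] by simp
    then show ?thesis by linarith
  qed
  show "(mb / 2)^2 * indicator (Cset H T s) z - 2 * pi * \<delta> * H * Kerr n * tlf T s n z \<le> Re (Bf w)"
  proof (cases "\<bar>Re z - s\<bar> \<le> T")
    case True
    then have "\<bar>?\<xi>\<bar> \<le> 1/6" using cen by simp
    then have "(mb / 2)^2 \<le> Re (Bf (complex_of_real ?\<xi>))" by (rule B_real(2))
    moreover have "norm (Bf w - Bf (complex_of_real ?\<xi>)) \<le> 2 * pi * \<delta> * H * Kerr n" using err[of 0] by simp
    ultimately show ?thesis using reB True z by (simp add: tlf_def Cset_def indicator_def)
  next
    case False
    then have x6: "1/6 < \<bar>?\<xi>\<bar>" using cen by linarith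
    have p6: "0 < 6 * \<bar>?\<xi>\<bar>" using x6 by simp
    have h6: "(6 * \<bar>?\<xi>\<bar>) ^ n \<le> (2 * pi * \<bar>?\<xi>\<bar>) ^ n"
      using pi_gt3 p6 by (intro power_mono mult_right_mono) auto
    have "(6 * \<bar>?\<xi>\<bar>) ^ n * norm (Bf w - Bf (complex_of_real ?\<xi>)) \<le> 2 * pi * \<delta> * H * Kerr n"
      by (rule order.trans[OF mult_right_mono[OF h6 norm_ge_zero] err]) simp
    then have "norm (Bf w - Bf (complex_of_real ?\<xi>)) \<le> 2 * pi * \<delta> * H * Kerr n * (1 / (6 * \<bar>?\<xi>\<bar>)) ^ n"
      using p6 by (simp add: power_divide field_simps)
    also have "\<dots> = 2 * pi * \<delta> * H * Kerr n * tlf T s n z"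
      using out False by (simp add: tlf_def)
    finally have "norm (Bf w - Bf (complex_of_real ?\<xi>)) \<le> 2 * pi * \<delta> * H * Kerr n * tlf T s n z" .
    moreover have "0 \<le> Re (Bf (complex_of_real ?\<xi>))" by (rule B_real(1))
    moreover have "z \<notin> Cset H T s" using False by (simp add: Cset_def)
    ultimately show ?thesis using reB by simp
  qed
qed


lemma Kerr_nonneg: "0 \<le> Kerr n" unfolding Kerr_def using Ke_nonneg[of 0] Ke_nonneg[of n] by simp
lemma Kb_nonneg: "0 \<le> Kb n" unfolding Kb_def using Mc_nonneg[of 0] Mc_nonneg[of n] by simp

lemma (in MU) per_s:
  assumes d: "0 < \<delta>" and H0: "0 \<le> H" and dH: "\<delta> * H \<le> 1 / (2 * pi)" and T: "T = 1 / (6 * \<delta>)"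
    and R: "T \<le> R" and G: "0 \<le> G" and NG: "\<And>a. measure \<mu> (Cset H T a) \<le> G * (1 + \<bar>a\<bar> / R) ^ m"
    and Ib: "norm (\<integral>z. Bf (complex_of_real \<delta> * (z - complex_of_real s)) \<partial>\<mu>) \<le> A"
  shows "(mb / 2)^2 * measure \<mu> (Cset H T s) \<le> A + 2 * pi * \<delta> * H * Kerr (m + 2) * (G * (1 + \<bar>s\<bar> / R) ^ m * qS m)"
proof -
  let ?n = "m + 2"
  let ?f = "\<lambda>z. Bf (complex_of_real \<delta> * (z - complex_of_real s))"
  let ?t = "tlf T s ?n"
  let ?e = "2 * pi * \<delta> * H * Kerr ?n"
  let ?W = "G * (1 + \<bar>s\<bar> / R) ^ m * qS m"
  have Tp: "0 < T" using T d by simp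
  have W0: "0 \<le> ?W" using G R Tp qS_ge1[of m] by simp
  have e0: "0 \<le> ?e" using d H0 Kerr_nonneg[of ?n] by simp
  have tm: "?t \<in> borel_measurable \<mu>"
    using tl_meas[of T s ?n] by (simp add: measurable_cong_sets[OF sets refl])
  have tnn: "(\<integral>\<^sup>+ z. ennreal (?t z) \<partial>\<mu>) \<le> ennreal ?W"
    by (rule weighted_tail[OF Tp R G NG])
  have ti: "integrable \<mu> ?t"
    by (rule integrableI_nonneg[OF tm]) (use tnn in \<open>auto simp: tl_nonneg[OF Tp] top.not_eq_extremum intro: le_less_trans\<close>)
  have tint: "(\<integral>z. ?t z \<partial>\<mu>) \<le> ?W"
  proof -
    have "(\<integral>z. ?t z \<partial>\<mu>) = enn2real (\<integral>\<^sup>+ z. ennreal (?t z) \<partial>\<mu>)"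
      by (rule integral_eq_nn_integral[OF tm]) (simp add: tl_nonneg[OF Tp])
    also have "\<dots> \<le> ?W" by (rule enn2real_leI[OF W0 tnn])
    finally show ?thesis .
  qed
  have fm: "?f \<in> borel_measurable \<mu>"
  proof -
    have "continuous_on UNIV ?f"
      by (rule continuous_on_compose2[OF Bf_cont[of UNIV]]) (auto intro!: continuous_intros)
    then show ?thesis unfolding measurable_cong_sets[OF sets refl] by (rule borel_measurable_continuous_onI)
  qed
  have fi: "integrable \<mu> ?f"
  proof (rule Bochner_Integration.integrable_bound[OF integrable_mult_right[OF ti, of "Kb ?n"] fm])
    show "AE z in \<mu>. norm (?f z) \<le> norm (Kb ?n * ?t z)"
      using AE_strip
    proof (rule AE_mp[OF _ AE_I2], intro impI)
      fix z assume z: "z \<in> strip H"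
      have "norm (?f z) \<le> Kb ?n * ?t z" by (rule Bw_bounds(1)[OF d T dH z])
      also have "\<dots> \<le> norm (Kb ?n * ?t z)" by simp
      finally show "norm (?f z) \<le> norm (Kb ?n * ?t z)" .
    qed
  qed
  have Cfin: "emeasure \<mu> (Cset H T s) < \<infinity>"
    using Cset_fin[OF Tp, of s] by (simp add: le_less_trans)
  have ci: "integrable \<mu> (indicator (Cset H T s) :: complex \<Rightarrow> real)"
    by (rule integrable_real_indicator[OF Cset_sets Cfin])
  have li: "integrable \<mu> (\<lambda>z. (mb / 2)^2 * indicator (Cset H T s) z - ?e * ?t z)"
    by (intro Bochner_Integration.integrable_diff integrable_mult_right ci ti)
  have "(\<integral>z. (mb / 2)^2 * indicator (Cset H T s) z - ?e * ?t z \<partial>\<mu>) \<le> (\<integral>z. Re (?f z) \<partial>\<mu>)"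
  proof (rule integral_mono_AE[OF li])
    show "integrable \<mu> (\<lambda>z. Re (?f z))" by (intro integrable_bounded_linear[OF bounded_linear_Re fi])
    show "AE z in \<mu>. (mb / 2)^2 * indicator (Cset H T s) z - ?e * ?t z \<le> Re (?f z)"
      using AE_strip
    proof (rule AE_mp[OF _ AE_I2], intro impI)
      fix z assume z: "z \<in> strip H"
      show "(mb / 2)^2 * indicator (Cset H T s) z - ?e * ?t z \<le> Re (?f z)"
        by (rule Bw_bounds(2)[OF d T dH z])
    qed
  qed
  also have "(\<integral>z. Re (?f z) \<partial>\<mu>) = Re (\<integral>z. ?f z \<partial>\<mu>)" by (rule integral_Re[OF fi])
  also have "\<dots> \<le> A" using Ib abs_Re_le_cmod[of "\<integral>z. ?f z \<partial>\<mu>"] by linarith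
  finally have 1: "(\<integral>z. (mb / 2)^2 * indicator (Cset H T s) z - ?e * ?t z \<partial>\<mu>) \<le> A" .
  have sp: "space \<mu> = UNIV" using sets_eq_imp_space_eq[OF sets] by simp
  have "(\<integral>z. (mb / 2)^2 * indicator (Cset H T s) z - ?e * ?t z \<partial>\<mu>)
      = (\<integral>z. (mb / 2)^2 * indicator (Cset H T s) z \<partial>\<mu>) - (\<integral>z. ?e * ?t z \<partial>\<mu>)"
    by (rule Bochner_Integration.integral_diff[OF integrable_mult_right[OF ci] integrable_mult_right[OF ti]])
  also have "(\<integral>z. (mb / 2)^2 * indicator (Cset H T s) z \<partial>\<mu>) = (mb / 2)^2 * measure \<mu> (Cset H T s)"
    by (simp add: sp)
  also have "(\<integral>z. ?e * ?t z \<partial>\<mu>) = ?e * (\<integral>z. ?t z \<partial>\<mu>)" by (rule integral_mult_right_zero)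
  finally have "(\<integral>z. (mb / 2)^2 * indicator (Cset H T s) z - ?e * ?t z \<partial>\<mu>)
      = (mb / 2)^2 * measure \<mu> (Cset H T s) - ?e * (\<integral>z. ?t z \<partial>\<mu>)" .
  with 1 have "(mb / 2)^2 * measure \<mu> (Cset H T s) \<le> A + ?e * (\<integral>z. ?t z \<partial>\<mu>)" by linarith
  also have "?e * (\<integral>z. ?t z \<partial>\<mu>) \<le> ?e * ?W" by (rule mult_left_mono[OF tint e0])
  finally show ?thesis by simp
qed


theorem theorem1:
  fixes H C0 \<rho> :: real and \<mu> :: "complex measure"
  assumes "H > 0"
    and "locally_finite_borel \<mu>"
    and "emeasure \<mu> (- strip H) = 0"
    and "C0 > 0" and "\<rho> > 0"
    and "\<forall>r>0. emeasure \<mu> {z \<in> strip H. \<bar>Re z\<bar> \<le> r} \<le> ennreal (C0 * max 1 (r powr \<rho>))"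
    and "fourier_c_is_measure \<mu>"
  shows "\<exists>B::real. \<forall>s::real. emeasure \<mu> {z \<in> strip H. s \<le> Re z \<and> Re z \<le> s + 1} \<le> ennreal B"
proof -
  interpret MU \<mu> H C0 \<rho>
    using assms(2-6) by unfold_locales (auto simp: locally_finite_borel_def)
  from assms(7) obtain \<nu> h where nu: "locally_finite_borel \<nu>" and hm: "h \<in> borel_measurable borel"
    and hn: "\<And>x. norm (h x) = 1" and heq: "\<And>\<phi>. \<phi> \<in> test_funs \<Longrightarrow> (\<integral>x. \<phi> x * h x \<partial>\<nu>) = fourier_c_measure \<mu> \<phi>"
    unfolding fourier_c_is_measure_def by blast
  have Hp: "0 < H" by (rule assms(1))
  define m where "m = nat \<lceil>\<rho>\<rceil>"
  define c1 where "c1 = (mb / 2)^2"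
  define K where "K = Kerr (m + 2)"
  define S where "S = qS m"
  define \<delta> where "\<delta> = min (1/6) (min (1 / (2 * pi * (H + 1))) (c1 / (4 * pi * (H + 1) * (K + 1) * S)))"
  have c1p: "0 < c1" using mb_pos by (simp add: c1_def)
  have K0: "0 \<le> K" by (simp add: K_def Kerr_nonneg)
  have S1: "1 \<le> S" by (simp add: S_def qS_ge1)
  have dpos: "0 < \<delta>" using c1p K0 S1 Hp by (simp add: \<delta>_def)
  have d6: "\<delta> \<le> 1/6" by (simp add: \<delta>_def)
  have dH: "\<delta> * H \<le> 1 / (2 * pi)"
  proof -
    have "\<delta> \<le> 1 / (2 * pi * (H + 1))" by (simp add: \<delta>_def)
    then have "\<delta> * H \<le> 1 / (2 * pi * (H + 1)) * H" using Hp by (intro mult_right_mono) auto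
    also have "\<dots> = 1 / (2 * pi) * (H / (H + 1))" by (simp add: field_simps)
    also have "\<dots> \<le> 1 / (2 * pi) * 1" using Hp by (intro mult_left_mono) auto
    finally show ?thesis by simp
  qed
  have eS: "2 * pi * \<delta> * H * K * S \<le> c1 / 2"
  proof -
    have "\<delta> \<le> c1 / (4 * pi * (H + 1) * (K + 1) * S)" by (simp add: \<delta>_def)
    then have "2 * pi * \<delta> * H * K * S \<le> 2 * pi * (c1 / (4 * pi * (H + 1) * (K + 1) * S)) * H * K * S"
      using Hp K0 S1 by (intro mult_right_mono mult_left_mono) auto
    also have "\<dots> = c1 / 2 * (H * K / ((H + 1) * (K + 1)))"
    proof -
      have gen: "\<And>p D. p \<noteq> 0 \<Longrightarrow> D \<noteq> 0 \<Longrightarrow> 2 * p * (c1 / (4 * p * D * S)) * H * K * S = c1 / 2 * (H * K / D)"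
        using S1 by (simp add: field_simps)
      have "(H + 1) * (K + 1) \<noteq> 0" using Hp K0 by simp
      from gen[OF pi_neq_zero this] show ?thesis by (simp only: mult.assoc)
    qed
    also have "\<dots> \<le> c1 / 2 * 1"
    proof (intro mult_left_mono)
      have "H * K \<le> (H + 1) * (K + 1)" using Hp K0 by (simp add: algebra_simps)
      then show "H * K / ((H + 1) * (K + 1)) \<le> 1" using Hp K0 by (simp add: divide_le_eq)
    qed (use c1p in auto)
    finally show ?thesis by simp
  qed
  define T where "T = 1 / (6 * \<delta>)"
  have T1: "1 \<le> T" using dpos d6 by (simp add: T_def field_simps)
  define A where "A = Mc 0 / \<delta> * measure \<nu> {-\<delta>..\<delta>}"
  have A0: "0 \<le> A" using dpos Mc_nonneg[of 0] by (simp add: A_def)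
  define N where "N a = measure \<mu> (Cset H T a)" for a
  have N0: "0 \<le> N a" for a by (simp add: N_def)
  have Ib: "norm (\<integral>z. Bf (complex_of_real \<delta> * (z - complex_of_real s)) \<partial>\<mu>) \<le> A" for s
  proof -
    have "(\<integral>x. phi \<delta> s x * h x \<partial>\<nu>) = fourier_c_measure \<mu> (phi \<delta> s)"
      by (rule heq[OF phi_test[OF dpos]])
    also have "\<dots> = (\<integral>z. Bf (complex_of_real \<delta> * (z - complex_of_real s)) \<partial>\<mu>)"
      unfolding fourier_c_measure_def by (rule Bochner_Integration.integral_cong[OF refl]) (rule phi_FT[OF dpos])
    finally have "(\<integral>z. Bf (complex_of_real \<delta> * (z - complex_of_real s)) \<partial>\<mu>) = (\<integral>x. phi \<delta> s x * h x \<partial>\<nu>)" ..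
    then show ?thesis using nu_bound[OF dpos nu hm hn, of s] by (simp add: A_def)
  qed
  have key: "c1 * N a \<le> A + 2 * pi * \<delta> * H * K * (G * (1 + \<bar>a\<bar> / R) ^ m * S)"
    if R: "T \<le> R" and G: "0 \<le> G" and NG: "\<And>a. N a \<le> G * (1 + \<bar>a\<bar> / R) ^ m" for a G R
    unfolding c1_def N_def K_def S_def
    by (rule per_s[OF dpos less_imp_le[OF Hp] dH T_def R G NG[unfolded N_def] Ib])
  have bound: "N a \<le> 2 * A / c1 * (1 + \<bar>a\<bar> / R) ^ m" if R: "T \<le> R" for a R
  proof -
    have Rp: "0 < R" using R T1 by simp
    define w where "w a = (1 + \<bar>a\<bar> / R) ^ m" for a
    have w1: "1 \<le> w a" for a using Rp by (simp add: w_def)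
    define Gs where "Gs = Sup (range (\<lambda>a. N a / w a))"
    have Nb: "N a / w a \<le> C0 * (1 + T + R) ^ m" for a
    proof -
      have "N a \<le> C0 * (1 + \<bar>a\<bar> + T) ^ m"
        unfolding N_def m_def using T1 by (intro Cset_measure_le) simp
      also have "\<dots> \<le> C0 * ((1 + T + R) * (1 + \<bar>a\<bar> / R)) ^ m"
      proof (intro mult_left_mono power_mono)
        have "\<bar>a\<bar> \<le> (1 + T + R) * \<bar>a\<bar> / R" using Rp T1 by (simp add: field_simps mult_right_mono)
        moreover have "(1 + T + R) * (1 + \<bar>a\<bar> / R) = (1 + T + R) + (1 + T + R) * \<bar>a\<bar> / R"
          by (simp add: distrib_left)
        ultimately show "1 + \<bar>a\<bar> + T \<le> (1 + T + R) * (1 + \<bar>a\<bar> / R)"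
          using Rp by linarith
      qed (use assms(4) T1 in auto)
      also have "\<dots> = C0 * (1 + T + R) ^ m * w a" by (simp add: w_def power_mult_distrib)
      finally show ?thesis using w1[of a] by (simp add: field_simps)
    qed
    have bdd: "bdd_above (range (\<lambda>a. N a / w a))"
      by (rule bdd_aboveI[where M="C0 * (1 + T + R) ^ m"]) (use Nb in auto)
    have Nle: "N a \<le> Gs * w a" for a
    proof -
      have "N a / w a \<le> Gs" unfolding Gs_def by (rule cSup_upper[OF _ bdd]) simp
      then show ?thesis using w1[of a] by (simp add: field_simps)
    qed
    have Gs0: "0 \<le> Gs"
    proof -
      have "0 \<le> Gs * w 0" using Nle[of 0] N0[of 0] by linarith
      then show ?thesis using w1[of 0] by (auto simp: zero_le_mult_iff)
    qed
    have "Sup (range (\<lambda>a. N a / w a)) \<le> (A + 2 * pi * \<delta> * H * K * S * Gs) / c1"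
    proof (rule cSup_least)
      show "range (\<lambda>a. N a / w a) \<noteq> {}" by simp
      fix x assume "x \<in> range (\<lambda>a. N a / w a)"
      then obtain a where x: "x = N a / w a" by auto
      have "c1 * N a \<le> A + 2 * pi * \<delta> * H * K * (Gs * w a * S)"
        using key[OF R Gs0, of a] Nle by (simp add: w_def)
      then have "c1 * N a / w a \<le> (A + 2 * pi * \<delta> * H * K * (Gs * w a * S)) / w a"
        using w1[of a] by (intro divide_right_mono) auto
      also have "\<dots> = A / w a + 2 * pi * \<delta> * H * K * S * Gs"
        using w1[of a] by (simp add: field_simps)
      also have "A / w a \<le> A" using A0 w1[of a] by (simp add: divide_le_eq mult_le_cancel_left1)
      finally have "c1 * (N a / w a) \<le> A + 2 * pi * \<delta> * H * K * S * Gs" by simp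
      then show "x \<le> (A + 2 * pi * \<delta> * H * K * S * Gs) / c1"
        unfolding x using c1p by (simp add: field_simps)
    qed
    then have "Gs \<le> (A + 2 * pi * \<delta> * H * K * S * Gs) / c1" by (simp only: Gs_def[symmetric])
    then have "c1 * Gs \<le> A + 2 * pi * \<delta> * H * K * S * Gs" using c1p by (simp add: field_simps)
    moreover have "2 * pi * \<delta> * H * K * S * Gs \<le> c1 / 2 * Gs" by (rule mult_right_mono[OF eS Gs0])
    ultimately have "Gs \<le> 2 * A / c1" using c1p by (simp add: field_simps)
    then have "Gs * w a \<le> 2 * A / c1 * w a" using w1[of a] by (intro mult_right_mono) auto
    with Nle[of a] show ?thesis by (simp add: w_def)
  qed
  show ?thesis
  proof (intro exI allI)
    fix s :: real
    let ?a = "s + 1/2"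
    define R where "R = max T \<bar>?a\<bar>"
    have RT: "T \<le> R" by (simp add: R_def)
    have Rp: "0 < R" using RT T1 by simp
    have "(1 + \<bar>?a\<bar> / R) ^ m \<le> 2 ^ m"
    proof (rule power_mono)
      have "\<bar>?a\<bar> / R \<le> 1" using Rp by (simp add: R_def divide_le_eq)
      then show "1 + \<bar>?a\<bar> / R \<le> 2" by simp
    qed (use Rp in auto)
    then have "2 * A / c1 * (1 + \<bar>?a\<bar> / R) ^ m \<le> 2 * A / c1 * 2 ^ m"
      using A0 c1p by (intro mult_left_mono) auto
    then have Na: "N ?a \<le> 2 * A / c1 * 2 ^ m"
      using bound[OF RT, of ?a] by linarith
    moreover have "emeasure \<mu> {z \<in> strip H. s \<le> Re z \<and> Re z \<le> s + 1} \<le> emeasure \<mu> (Cset H T ?a)"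
      by (rule emeasure_mono[OF _ Cset_sets]) (use T1 in \<open>auto simp: Cset_def abs_le_iff\<close>)
    moreover have "emeasure \<mu> (Cset H T ?a) = ennreal (N ?a)"
      using T1 by (simp add: N_def Cset_emeasure)
    moreover have "ennreal (N ?a) \<le> ennreal (2 * A / c1 * 2 ^ m)" by (rule ennreal_leI[OF Na])
    ultimately show "emeasure \<mu> {z \<in> strip H. s \<le> Re z \<and> Re z \<le> s + 1} \<le> ennreal (2 * A / c1 * 2 ^ m)"
      by simp
  qed
qed


end
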